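(* Suppose $N\geq2$. Let $l\geq1$ and let $i,j$ be the integers with $l+1=i+j(N-1)$, $j\ge0$, $1\le i\le N-1$. There is a derivation $\partial_l:A\to A$, homogeneous of degree $l$, such that \[ \partial_l(x)=x^iy^j,\qquad \partial_l(y)=\sum_{s+2+t=N}(s+1)\,x^{s+i}y^jx^t+(N-i)\,x^{i-1}\Phi_{j+1} \] (the sum over $s,t\ge0$), and its cohomology class spans $\mathrm{HH}^1(A)_l$.
   Context: Let $\Bbbk$ be a field of characteristic zero and $N\geq2$ an integer. Let $A=A_N$ be the $\Bbbk$-algebra generated by $x,y$ subject to $yx-xy=x^N$, graded with $x$ in degree $1$, $y$ in degree $N-1$. For $k\ge1$, $\Phi_k$ is the unique element of $Ay$, homogeneous of degree $k(N-1)$, with $\Phi_kx-x\Phi_k=x^Ny^{k-1}$. $\mathrm{HH}^1(A)=\mathrm{Der}(A)/\mathrm{InnDer}(A)$ with grading given by derivations $d$ with $d(A_p)\subseteq A_{p+l}$. *)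

theory Defs
  imports Main
begin

text \<open>The free associative algebra k<x,y>: finitely supported functions on words
  over the alphabet bool, where False stands for the letter x and True for y.
  A = A_N is the quotient of this free algebra by the two-sided ideal generated by
  yx - xy - x^N; elements of A are represented by free-algebra elements modulo that ideal.\<close>

type_synonym 'k fa = "bool list \<Rightarrow> 'k"

definition fa_carrier :: "'k::zero fa set" where
  "fa_carrier = {f. finite {w. f w \<noteq> 0}}"

definition fa_zero :: "'k::zero fa" where "fa_zero = (\<lambda>_. 0)"
definition fa_one :: "'k::{zero,one} fa" where "fa_one = (\<lambda>w. if w = [] then 1 else 0)"
definition fa_add :: "'k::plus fa \<Rightarrow> 'k fa \<Rightarrow> 'k fa" where "fa_add f g = (\<lambda>w. f w + g w)"
definition fa_sub :: "'k::minus fa \<Rightarrow> 'k fa \<Rightarrow> 'k fa" where "fa_sub f g = (\<lambda>w. f w - g w)"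
definition fa_smul :: "'k::times \<Rightarrow> 'k fa \<Rightarrow> 'k fa" where "fa_smul c f = (\<lambda>w. c * f w)"

definition fa_mul :: "'k::comm_semiring_1 fa \<Rightarrow> 'k fa \<Rightarrow> 'k fa" where
  "fa_mul f g = (\<lambda>w. \<Sum>n\<le>length w. f (take n w) * g (drop n w))"

definition fa_pow :: "'k::comm_semiring_1 fa \<Rightarrow> nat \<Rightarrow> 'k fa" where
  "fa_pow f n = ((fa_mul f) ^^ n) fa_one"

definition fa_x :: "'k::{zero,one} fa" where "fa_x = (\<lambda>w. if w = [False] then 1 else 0)"
definition fa_y :: "'k::{zero,one} fa" where "fa_y = (\<lambda>w. if w = [True] then 1 else 0)"

definition relator :: "nat \<Rightarrow> 'k::comm_ring_1 fa" where
  "relator N = fa_sub (fa_sub (fa_mul fa_y fa_x) (fa_mul fa_x fa_y)) (fa_pow fa_x N)"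

inductive_set rel_ideal :: "nat \<Rightarrow> 'k::comm_ring_1 fa set" for N where
  gen: "relator N \<in> rel_ideal N"
| zero: "fa_zero \<in> rel_ideal N"
| add: "f \<in> rel_ideal N \<Longrightarrow> g \<in> rel_ideal N \<Longrightarrow> fa_add f g \<in> rel_ideal N"
| mult_left: "f \<in> rel_ideal N \<Longrightarrow> u \<in> fa_carrier \<Longrightarrow> fa_mul u f \<in> rel_ideal N"
| mult_right: "f \<in> rel_ideal N \<Longrightarrow> u \<in> fa_carrier \<Longrightarrow> fa_mul f u \<in> rel_ideal N"

definition eqA :: "nat \<Rightarrow> 'k::comm_ring_1 fa \<Rightarrow> 'k fa \<Rightarrow> bool" where
  "eqA N f g \<longleftrightarrow> fa_sub f g \<in> rel_ideal N"

definition wdeg :: "nat \<Rightarrow> bool list \<Rightarrow> nat" where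
  "wdeg N w = length (filter Not w) + (N - 1) * length (filter id w)"

definition fa_homog :: "nat \<Rightarrow> nat \<Rightarrow> 'k::zero fa \<Rightarrow> bool" where
  "fa_homog N p f \<longleftrightarrow> (\<forall>w. f w \<noteq> 0 \<longrightarrow> wdeg N w = p)"

definition homogA :: "nat \<Rightarrow> nat \<Rightarrow> 'k::comm_ring_1 fa \<Rightarrow> bool" where
  "homogA N p f \<longleftrightarrow> (\<exists>h\<in>fa_carrier. fa_homog N p h \<and> eqA N f h)"

definition is_derA :: "nat \<Rightarrow> ('k::comm_ring_1 fa \<Rightarrow> 'k fa) \<Rightarrow> bool" where
  "is_derA N D \<longleftrightarrow>
     (\<forall>f\<in>fa_carrier. D f \<in> fa_carrier) \<and>
     (\<forall>f\<in>fa_carrier. \<forall>g\<in>fa_carrier. eqA N f g \<longrightarrow> eqA N (D f) (D g)) \<and>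
     (\<forall>c. \<forall>f\<in>fa_carrier. \<forall>g\<in>fa_carrier.
        eqA N (D (fa_add (fa_smul c f) g)) (fa_add (fa_smul c (D f)) (D g))) \<and>
     (\<forall>f\<in>fa_carrier. \<forall>g\<in>fa_carrier.
        eqA N (D (fa_mul f g)) (fa_add (fa_mul (D f) g) (fa_mul f (D g))))"

definition homog_derA :: "nat \<Rightarrow> nat \<Rightarrow> ('k::comm_ring_1 fa \<Rightarrow> 'k fa) \<Rightarrow> bool" where
  "homog_derA N l D \<longleftrightarrow>
     (\<forall>p. \<forall>f\<in>fa_carrier. homogA N p f \<longrightarrow> homogA N (p + l) (D f))"

definition is_Phi :: "nat \<Rightarrow> nat \<Rightarrow> 'k::comm_ring_1 fa \<Rightarrow> bool" where
  "is_Phi N k f \<longleftrightarrow> f \<in> fa_carrier \<and>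
     (\<exists>g\<in>fa_carrier. eqA N f (fa_mul g fa_y)) \<and>
     homogA N (k * (N - 1)) f \<and>
     eqA N (fa_sub (fa_mul f fa_x) (fa_mul fa_x f)) (fa_mul (fa_pow fa_x N) (fa_pow fa_y (k - 1)))"

definition Phi :: "nat \<Rightarrow> nat \<Rightarrow> 'k::comm_ring_1 fa" where
  "Phi N k = (SOME f. is_Phi N k f)"

end

theory Submission
  imports Defs "HOL-Library.Poly_Mapping"
begin


datatype wd = W (unW: "bool list")

instantiation wd :: monoid_add
begin
definition zero_wd :: wd where "zero_wd = W []"
definition plus_wd :: "wd \<Rightarrow> wd \<Rightarrow> wd" where "plus_wd a b = W (unW a @ unW b)"
instance by standard (auto simp: zero_wd_def plus_wd_def)
end

lemma plus_W[simp]: "W a + W b = W (a @ b)" by (simp add: plus_wd_def)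
lemma zero_W: "0 = W []" by (simp add: zero_wd_def)

type_synonym 'k FA = "wd \<Rightarrow>\<^sub>0 'k"

definition toP :: "'k::zero fa \<Rightarrow> 'k FA" where
  "toP f = Abs_poly_mapping (\<lambda>w. f (unW w))"
definition frP :: "'k::zero FA \<Rightarrow> 'k fa" where
  "frP p = (\<lambda>l. Poly_Mapping.lookup p (W l))"

lemma fin_carrier_W: "f \<in> fa_carrier \<Longrightarrow> finite {w. f (unW w) \<noteq> 0}"
proof -
  assume "f \<in> fa_carrier"
  hence "finite {l. f l \<noteq> 0}" by (simp add: fa_carrier_def)
  hence "finite (W ` {l. f l \<noteq> 0})" by simp
  moreover have "{w. f (unW w) \<noteq> 0} \<subseteq> W ` {l. f l \<noteq> 0}"
    by (auto intro: image_eqI[where x="unW _"])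
  ultimately show ?thesis using finite_subset by blast
qed

lemma lookup_toP: "f \<in> fa_carrier \<Longrightarrow> Poly_Mapping.lookup (toP f) w = f (unW w)"
  unfolding toP_def by (subst lookup_Abs_poly_mapping[OF fin_carrier_W]) auto

lemma frP_toP[simp]: "f \<in> fa_carrier \<Longrightarrow> frP (toP f) = f"
  by (auto simp: frP_def lookup_toP)

lemma frP_carrier[simp]: "frP p \<in> fa_carrier"
proof -
  have "{l. Poly_Mapping.lookup p (W l) \<noteq> 0} = unW ` Poly_Mapping.keys p"
    by (auto simp: in_keys_iff intro: image_eqI[where x="W _"])
  thus ?thesis by (simp add: fa_carrier_def frP_def)
qed

lemma toP_frP[simp]: "toP (frP p) = p"
  by (rule poly_mapping_eqI) (simp add: lookup_toP[OF frP_carrier, unfolded frP_def] frP_def)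

lemma frP_inj: "frP p = frP q \<Longrightarrow> p = q"
  by (metis toP_frP)


lemma inner_sum_W:
  "(\<Sum>r. (g r when W L = a + r)) =
   (if take (length (unW a)) L = unW a then g (W (drop (length (unW a)) L)) else 0)"
proof -
  have eq: "(\<lambda>r. (g r when W L = a + r)) =
     (\<lambda>r. if r = W (drop (length (unW a)) L) then
             (if take (length (unW a)) L = unW a then g r else 0) else 0)"
  proof
    fix r
    have "W L = a + r \<longleftrightarrow> L = unW a @ unW r"
      by (cases a; cases r) auto
    also have "\<dots> \<longleftrightarrow> (r = W (drop (length (unW a)) L) \<and> take (length (unW a)) L = unW a)"
      by (cases r) (auto simp: append_eq_conv_conj, metis append_take_drop_id)
    finally show "(g r when W L = a + r) = (if r = W (drop (length (unW a)) L) then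
             (if take (length (unW a)) L = unW a then g r else 0) else 0)"
      by auto
  qed
  show ?thesis unfolding eq Sum_any.delta by simp
qed

lemma lookup_mult_W:
  "Poly_Mapping.lookup (p * q) (W L) =
   (\<Sum>n\<le>length L. Poly_Mapping.lookup p (W (take n L)) * Poly_Mapping.lookup q (W (drop n L)))"
proof -
  let ?f = "Poly_Mapping.lookup p" and ?g = "Poly_Mapping.lookup q"
  let ?h = "\<lambda>a. ?f a * (if take (length (unW a)) L = unW a then ?g (W (drop (length (unW a)) L)) else 0)"
  have "Poly_Mapping.lookup (p * q) (W L) = (\<Sum>a. ?h a)"
    by (simp add: lookup_mult inner_sum_W)
  also have "\<dots> = sum ?h ((\<lambda>n. W (take n L)) ` {..length L})"
  proof (rule Sum_any.expand_superset)
    show "{a. ?h a \<noteq> 0} \<subseteq> (\<lambda>n. W (take n L)) ` {..length L}"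
    proof
      fix a assume "a \<in> {a. ?h a \<noteq> 0}"
      hence "take (length (unW a)) L = unW a" by (auto split: if_splits)
      hence "a = W (take (length (unW a)) L)" "length (unW a) \<le> length L"
        by (metis wd.collapse, metis length_take min.bounded_iff order_refl)
      thus "a \<in> (\<lambda>n. W (take n L)) ` {..length L}" by auto
    qed
  qed simp
  also have "\<dots> = sum (?h \<circ> (\<lambda>n. W (take n L))) {..length L}"
  proof (rule sum.reindex)
    show "inj_on (\<lambda>n. W (take n L)) {..length L}"
      by (rule inj_onI) (metis atMost_iff length_take min.absorb2 wd.inject)
  qed
  also have "\<dots> = (\<Sum>n\<le>length L. ?f (W (take n L)) * ?g (W (drop n L)))"
    by (rule sum.cong) (auto simp: min_def)
  finally show ?thesis .
qed

lemma frP_mult: "frP (p * q) = fa_mul (frP p) (frP q)"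
  by (simp add: frP_def fa_mul_def lookup_mult_W)

lemma frP_add: "frP (p + q) = fa_add (frP p) (frP q)"
  by (simp add: frP_def fa_add_def lookup_add)

lemma frP_diff: "frP (p - q) = fa_sub (frP p) (frP q)"
  by (simp add: frP_def fa_sub_def lookup_minus)

lemma frP_zero: "frP 0 = fa_zero"
  by (simp add: frP_def fa_zero_def)

lemma frP_one: "frP 1 = fa_one"
  by (auto simp: frP_def fa_one_def lookup_one zero_W)

definition sP :: "'k \<Rightarrow> 'k::ring_1 FA" where "sP c = Poly_Mapping.single 0 c"

lemma frP_smul: "frP (sP c * p) = fa_smul c (frP p)"
proof -
  have "(\<Sum>n\<le>length l. (if n = 0 \<or> l = [] then c else 0) * Poly_Mapping.lookup p (W (drop n l)))
      = c * Poly_Mapping.lookup p (W l)" for l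
  proof (cases l)
    case Nil thus ?thesis by simp
  next
    case (Cons b m)
    thus ?thesis by (simp add: sum.atMost_Suc_shift del: sum.atMost_Suc)
  qed
  thus ?thesis
    by (simp add: sP_def frP_def fa_smul_def lookup_mult_W lookup_single zero_W when_def)
qed


definition "islin T \<longleftrightarrow> (\<forall>u v. T (\<lambda>z. u z + v z) = (\<lambda>z. T u z + T v z)) \<and>
     (\<forall>c u. T (\<lambda>z. c * u z) = (\<lambda>z. c * T u z))"

typedef (overloaded) 'k::comm_ring_1 op = "{T :: (nat \<times> nat \<Rightarrow> 'k) \<Rightarrow> (nat \<times> nat \<Rightarrow> 'k). islin T}"
  morphisms app Op
  by (rule exI[of _ id]) (simp add: islin_def)

setup_lifting type_definition_op

lemma islin_app: "islin (app T)" using app by simp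

lemma app_add: "app T (\<lambda>z. u z + v z) = (\<lambda>z. app T u z + app T v z)"
  using islin_app[of T] by (simp add: islin_def)
lemma app_smul: "app T (\<lambda>z. c * u z) = (\<lambda>z. c * app T u z)"
  using islin_app[of T] by (simp add: islin_def)
lemma app_zero: "app T (\<lambda>z. 0) = (\<lambda>z. 0)"
  using app_smul[of T 0 "\<lambda>z. 0"] by simp
lemma app_neg: "app T (\<lambda>z. - u z) = (\<lambda>z. - app T u z)"
  using app_smul[of T "-1" u] by simp
lemma app_diff: "app T (\<lambda>z. u z - v z) = (\<lambda>z. app T u z - app T v z)"
  using app_add[of T u "\<lambda>z. - v z"] app_neg[of T v] by simp

instantiation op :: (comm_ring_1) ring_1
begin
lift_definition zero_op :: "'a op" is "\<lambda>v z. 0" by (simp add: islin_def)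
lift_definition one_op :: "'a op" is "\<lambda>v. v" by (simp add: islin_def)
lift_definition plus_op :: "'a op \<Rightarrow> 'a op \<Rightarrow> 'a op" is "\<lambda>S T v z. S v z + T v z"
  by (simp add: islin_def algebra_simps)
lift_definition uminus_op :: "'a op \<Rightarrow> 'a op" is "\<lambda>S v z. - S v z"
  by (simp add: islin_def algebra_simps)
lift_definition minus_op :: "'a op \<Rightarrow> 'a op \<Rightarrow> 'a op" is "\<lambda>S T v z. S v z - T v z"
  by (simp add: islin_def algebra_simps)
lift_definition times_op :: "'a op \<Rightarrow> 'a op \<Rightarrow> 'a op" is "\<lambda>S T v. S (T v)"
  by (simp add: islin_def)
instance
proof
  fix a b c :: "'a op"
  show "a * b * c = a * (b * c)" by transfer simp
  show "1 * a = a" by transfer simp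
  show "a * 1 = a" by transfer simp
  show "a + b + c = a + (b + c)" by transfer (simp add: add.assoc)
  show "a + b = b + a" by transfer (simp add: add.commute)
  show "0 + a = a" by transfer simp
  show "- a + a = 0" by transfer simp
  show "a - b = a + - b" by transfer simp
  show "(a + b) * c = a * c + b * c" by transfer simp
  show "a * (b + c) = a * b + a * c" by transfer (simp add: islin_def)
  show "(0::'a op) \<noteq> 1"
  proof
    assume "(0::'a op) = 1"
    hence "app (0::'a op) (\<lambda>z. 1) (0,0) = app 1 (\<lambda>z. 1) (0,0)" by simp
    thus False by (simp add: zero_op.rep_eq one_op.rep_eq)
  qed
qed
end

lemma app_times: "app (S * T) v = app S (app T v)" by transfer simp
lemma app_plus: "app (S + T) v = (\<lambda>z. app S v z + app T v z)" by transfer simp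
lemma app_minus: "app (S - T) v = (\<lambda>z. app S v z - app T v z)" by transfer simp
lemma app_one: "app 1 v = v" by transfer simp
lemma app_zero_op: "app 0 v = (\<lambda>z. 0)" by transfer simp
lemma app_uminus: "app (- S) v = (\<lambda>z. - app S v z)" by transfer simp

lemma op_eqI: "(\<And>v. app S v = app T v) \<Longrightarrow> S = T"
  by transfer auto

lift_definition sc :: "'k \<Rightarrow> 'k::comm_ring_1 op" is "\<lambda>c v z. c * v z"
  by (simp add: islin_def algebra_simps)

lemma app_sc: "app (sc c) v = (\<lambda>z. c * v z)" by transfer simp

lemma sc_comm: "sc c * T = T * sc c"
  by (rule op_eqI) (simp add: app_times app_sc app_smul)
lemma sc_add: "sc (a + b) = sc a + sc b"
  by (rule op_eqI) (simp add: app_plus app_sc algebra_simps)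
lemma sc_mult: "sc (a * b) = sc a * sc b"
  by (rule op_eqI) (simp add: app_times app_sc algebra_simps)
lemma sc_one: "sc 1 = 1"
  by (rule op_eqI) (simp add: app_one app_sc)
lemma sc_zero: "sc 0 = 0"
  by (rule op_eqI) (simp add: app_zero_op app_sc)
lemma sc_diff: "sc (a - b) = sc a - sc b"
  by (rule op_eqI) (simp add: app_minus app_sc algebra_simps)
lemma sc_neg: "sc (- a) = - sc a"
  by (rule op_eqI) (simp add: app_uminus app_sc algebra_simps)
lemma sc_of_nat: "sc (of_nat n) = of_nat n"
  by (induction n) (simp_all add: sc_zero sc_one sc_add)
lemma sc_sum: "sc (sum f A) = (\<Sum>a\<in>A. sc (f a))"
  by (induction A rule: infinite_finite_induct) (simp_all add: sc_zero sc_add)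

lemma app_sum: "app (sum f A) v = (\<lambda>z. \<Sum>a\<in>A. app (f a) v z)"
  by (induction A rule: infinite_finite_induct) (simp_all add: app_zero_op app_plus)


definition xP :: "'k::comm_ring_1 FA" where "xP = Poly_Mapping.single (W [False]) 1"
definition yP :: "'k::comm_ring_1 FA" where "yP = Poly_Mapping.single (W [True]) 1"

lemma frP_xP: "frP xP = fa_x"
  by (auto simp: frP_def xP_def fa_x_def lookup_single when_def)
lemma frP_yP: "frP yP = fa_y"
  by (auto simp: frP_def yP_def fa_y_def lookup_single when_def)
lemma frP_power: "frP (p ^ n) = fa_pow (frP p) n"
  by (induction n) (simp_all add: fa_pow_def frP_one frP_mult)

definition relP :: "nat \<Rightarrow> 'k::comm_ring_1 FA" where
  "relP N = yP * xP - xP * yP - xP ^ N"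

lemma frP_relP: "frP (relP N) = relator N"
  by (simp add: relP_def relator_def frP_diff frP_mult frP_xP frP_yP frP_power)

lemma carrier_mul: "(f::'k::comm_ring_1 fa) \<in> fa_carrier \<Longrightarrow> g \<in> fa_carrier \<Longrightarrow> fa_mul f g \<in> fa_carrier"
  using frP_carrier[of "toP f * toP g"] by (simp add: frP_mult)

lemma carrier_add: "(f::'k::comm_ring_1 fa) \<in> fa_carrier \<Longrightarrow> g \<in> fa_carrier \<Longrightarrow> fa_add f g \<in> fa_carrier"
  using frP_carrier[of "toP f + toP g"] by (simp add: frP_add)

lemma carrier_sub: "(f::'k::comm_ring_1 fa) \<in> fa_carrier \<Longrightarrow> g \<in> fa_carrier \<Longrightarrow> fa_sub f g \<in> fa_carrier"
  using frP_carrier[of "toP f - toP g"] by (simp add: frP_diff)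

lemma carrier_smul: "(f::'k::comm_ring_1 fa) \<in> fa_carrier \<Longrightarrow> fa_smul c f \<in> fa_carrier"
  using frP_carrier[of "sP c * toP f"] by (simp add: frP_smul)

lemma toP_mult: "(f::'k::comm_ring_1 fa) \<in> fa_carrier \<Longrightarrow> g \<in> fa_carrier \<Longrightarrow> toP (fa_mul f g) = toP f * toP g"
  by (rule frP_inj) (simp add: carrier_mul carrier_add carrier_sub carrier_smul frP_mult)

lemma toP_add: "(f::'k::comm_ring_1 fa) \<in> fa_carrier \<Longrightarrow> g \<in> fa_carrier \<Longrightarrow> toP (fa_add f g) = toP f + toP g"
  by (rule frP_inj) (simp add: carrier_mul carrier_add carrier_sub carrier_smul frP_add)

lemma toP_sub: "(f::'k::comm_ring_1 fa) \<in> fa_carrier \<Longrightarrow> g \<in> fa_carrier \<Longrightarrow> toP (fa_sub f g) = toP f - toP g"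
  by (rule frP_inj) (simp add: carrier_mul carrier_add carrier_sub carrier_smul frP_diff)

lemma toP_smul: "(f::'k::comm_ring_1 fa) \<in> fa_carrier \<Longrightarrow> toP (fa_smul c f) = sP c * toP f"
  by (rule frP_inj) (simp add: carrier_mul carrier_add carrier_sub carrier_smul frP_smul)

lemma rel_ideal_carrier: "f \<in> rel_ideal N \<Longrightarrow> (f::'k::comm_ring_1 fa) \<in> fa_carrier"
proof (induction rule: rel_ideal.induct)
  case gen show ?case by (metis frP_relP frP_carrier)
next
  case zero show ?case by (metis frP_zero frP_carrier)
qed (auto simp: carrier_mul carrier_add)

definition IN :: "nat \<Rightarrow> 'k::comm_ring_1 FA set" where "IN N = {p. frP p \<in> rel_ideal N}"

lemma IN_rel: "relP N \<in> IN N" by (simp add: IN_def frP_relP rel_ideal.gen)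
lemma IN_zero: "0 \<in> IN N" by (simp add: IN_def frP_zero rel_ideal.zero)
lemma IN_add: "p \<in> IN N \<Longrightarrow> q \<in> IN N \<Longrightarrow> p + q \<in> IN N"
  by (simp add: IN_def frP_add rel_ideal.add)
lemma IN_multL: "p \<in> IN N \<Longrightarrow> u * p \<in> IN N"
  by (simp add: IN_def frP_mult rel_ideal.mult_left)
lemma IN_multR: "p \<in> IN N \<Longrightarrow> p * u \<in> IN N"
  by (simp add: IN_def frP_mult rel_ideal.mult_right)
lemma IN_neg: "p \<in> IN N \<Longrightarrow> - p \<in> IN N"
  using IN_multL[of p N "-1"] by simp
lemma IN_diff: "p \<in> IN N \<Longrightarrow> q \<in> IN N \<Longrightarrow> p - q \<in> IN N"
  using IN_add[OF _ IN_neg] by (metis diff_conv_add_uminus)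
lemma IN_sum: "(\<And>a. a \<in> A \<Longrightarrow> f a \<in> IN N) \<Longrightarrow> sum f A \<in> IN N"
  by (induction A rule: infinite_finite_induct) (auto intro: IN_add IN_zero)

lemma eqA_IN: "f \<in> fa_carrier \<Longrightarrow> g \<in> fa_carrier \<Longrightarrow> eqA N f g \<longleftrightarrow> toP f - toP g \<in> IN N"
  by (simp add: eqA_def IN_def frP_diff)

definition Xv :: "(nat \<times> nat \<Rightarrow> 'k::comm_ring_1) \<Rightarrow> nat \<times> nat \<Rightarrow> 'k" where
  "Xv v = (\<lambda>(a,b). if a = 0 then 0 else v (a - 1, b))"
definition Yv :: "nat \<Rightarrow> (nat \<times> nat \<Rightarrow> 'k::comm_ring_1) \<Rightarrow> nat \<times> nat \<Rightarrow> 'k" where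
  "Yv N v = (\<lambda>(a,b). (if b = 0 then 0 else v (a, b - 1)) +
      (if N - 1 \<le> a then of_nat (a - (N - 1)) * v (a - (N - 1), b) else 0))"

lemma islin_Xv: "islin Xv"
  by (auto simp: islin_def Xv_def fun_eq_iff)
lemma islin_Yv: "islin (Yv N)"
  by (auto simp: islin_def Yv_def fun_eq_iff algebra_simps)

definition Xo :: "'k::comm_ring_1 op" where "Xo = Op Xv"
definition Yo :: "nat \<Rightarrow> 'k::comm_ring_1 op" where "Yo N = Op (Yv N)"

lemma app_Xo: "app Xo = Xv" by (simp add: Xo_def Op_inverse islin_Xv)
lemma app_Yo: "app (Yo N) = Yv N" by (simp add: Yo_def Op_inverse islin_Yv)

lemma app_Xo_pow: "app (Xo ^ n) v = (\<lambda>(a,b). if n \<le> a then v (a - n, b) else 0)"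
proof (induction n arbitrary: v)
  case 0 thus ?case by (simp add: app_one)
next
  case (Suc n)
  show ?case
    by (auto simp: app_times app_Xo Suc Xv_def fun_eq_iff)
qed

lemma YX_rel: "N \<ge> 1 \<Longrightarrow> Yo N * Xo - Xo * Yo N = (Xo ^ N :: 'k::comm_ring_1 op)"
proof (rule op_eqI)
  fix v :: "nat \<times> nat \<Rightarrow> 'k"
  assume N: "N \<ge> 1"
  show "app (Yo N * Xo - Xo * Yo N) v = app (Xo ^ N) v"
  proof
    fix z :: "nat \<times> nat"
    obtain a b where z: "z = (a,b)" by (cases z)
    have L: "app (Yo N * Xo - Xo * Yo N) v z =
       ((if b = 0 then 0 else Xv v (a, b - 1)) +
         (if N - 1 \<le> a then of_nat (a - (N - 1)) * Xv v (a - (N - 1), b) else 0))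
      - (if a = 0 then 0 else Yv N v (a - 1, b))"
      by (simp add: z app_minus app_times app_Xo app_Yo Yv_def Xv_def)
    show "app (Yo N * Xo - Xo * Yo N) v z = app (Xo ^ N) v z"
    proof (cases "N \<le> a")
      case True
      obtain m where a: "a = N + m" using le_Suc_ex[OF True] by blast
      obtain K where K: "N = Suc K" using N by (cases N) auto
      have R: "app (Xo ^ N) v z = v (m, b)" using True by (simp add: z app_Xo_pow a)
      show ?thesis unfolding L R
        by (simp add: Xv_def Yv_def a K algebra_simps)
    next
      case False
      have R: "app (Xo ^ N) v z = 0" using False by (simp add: z app_Xo_pow)
      have e: "\<not> (N - 1 \<le> a - 1) \<or> a = 0" using False N by auto
      show ?thesis
      proof (cases "N - 1 \<le> a")
        case True
        hence "a - (N - 1) = 0" using False by auto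
        thus ?thesis using e unfolding L R by (auto simp: Xv_def Yv_def)
      next
        case False
        thus ?thesis using e unfolding L R by (auto simp: Xv_def Yv_def)
      qed
    qed
  qed
qed


fun rw :: "nat \<Rightarrow> bool list \<Rightarrow> 'k::comm_ring_1 op" where
  "rw N [] = 1"
| "rw N (b # l) = (if b then Yo N else Xo) * rw N l"

lemma rw_append: "rw N (l1 @ l2) = rw N l1 * rw N l2"
  by (induction l1) (simp_all add: mult.assoc)

definition rho :: "nat \<Rightarrow> 'k::comm_ring_1 FA \<Rightarrow> 'k op" where
  "rho N p = (\<Sum>w\<in>Poly_Mapping.keys p. sc (Poly_Mapping.lookup p w) * rw N (unW w))"

lemma rho_superset:
  assumes "finite S" "Poly_Mapping.keys p \<subseteq> S"
  shows "rho N p = (\<Sum>w\<in>S. sc (Poly_Mapping.lookup p w) * rw N (unW w))"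
  unfolding rho_def
  by (rule sum.mono_neutral_left[OF assms(1) assms(2)]) (simp add: in_keys_iff sc_zero)

lemma rho_add: "rho N (p + q) = rho N p + rho N q"
proof -
  let ?S = "Poly_Mapping.keys p \<union> Poly_Mapping.keys q"
  have "rho N (p + q) = (\<Sum>w\<in>?S. sc (Poly_Mapping.lookup (p+q) w) * rw N (unW w))"
    by (rule rho_superset) (simp_all add: keys_add[of p q])
  also have "\<dots> = (\<Sum>w\<in>?S. sc (Poly_Mapping.lookup p w) * rw N (unW w)) +
                  (\<Sum>w\<in>?S. sc (Poly_Mapping.lookup q w) * rw N (unW w))"
    by (simp add: lookup_add sc_add distrib_right sum.distrib)
  also have "\<dots> = rho N p + rho N q"
    by (simp add: rho_superset[symmetric])
  finally show ?thesis .
qed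

lemma rho_zero: "rho N 0 = 0" by (simp add: rho_def)

lemma rho_sum: "rho N (sum f A) = (\<Sum>a\<in>A. rho N (f a))"
  by (induction A rule: infinite_finite_induct) (simp_all add: rho_zero rho_add)

lemma rho_single: "rho N (Poly_Mapping.single w c) = sc c * rw N (unW w)"
proof -
  have "rho N (Poly_Mapping.single w c) = (\<Sum>w'\<in>{w}. sc (Poly_Mapping.lookup (Poly_Mapping.single w c) w') * rw N (unW w'))"
    by (rule rho_superset) auto
  thus ?thesis by simp
qed

lemma pm_decomp: "p = (\<Sum>a\<in>Poly_Mapping.keys p. Poly_Mapping.single a (Poly_Mapping.lookup p a))"
proof (rule poly_mapping_eqI)
  fix k
  show "Poly_Mapping.lookup p k = Poly_Mapping.lookup (\<Sum>a\<in>Poly_Mapping.keys p. Poly_Mapping.single a (Poly_Mapping.lookup p a)) k"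
  proof (cases "k \<in> Poly_Mapping.keys p")
    case True
    thus ?thesis by (simp add: lookup_sum lookup_single when_def sum.delta)
  next
    case False
    thus ?thesis by (simp add: lookup_sum lookup_single when_def in_keys_iff)
  qed
qed

lemma rho_mult: "rho N (p * q) = rho N p * rho N q"
proof -
  let ?sp = "\<lambda>a. Poly_Mapping.single a (Poly_Mapping.lookup p a)"
  let ?sq = "\<lambda>b. Poly_Mapping.single b (Poly_Mapping.lookup q b)"
  have "p * q = (\<Sum>a\<in>Poly_Mapping.keys p. ?sp a) * (\<Sum>b\<in>Poly_Mapping.keys q. ?sq b)"
    by (simp flip: pm_decomp)
  also have "\<dots> = (\<Sum>a\<in>Poly_Mapping.keys p. \<Sum>b\<in>Poly_Mapping.keys q. ?sp a * ?sq b)"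
    by (simp only: sum_distrib_left sum_distrib_right) (rule sum.swap)
  finally have 1: "rho N (p * q) = (\<Sum>a\<in>Poly_Mapping.keys p. \<Sum>b\<in>Poly_Mapping.keys q. rho N (?sp a * ?sq b))"
    by (simp add: rho_sum)
  have 2: "rho N (?sp a * ?sq b) = rho N (?sp a) * rho N (?sq b)" for a b
  proof -
    have "rho N (?sp a * ?sq b) = sc (Poly_Mapping.lookup p a * Poly_Mapping.lookup q b) * rw N (unW a @ unW b)"
      by (simp add: mult_single rho_single plus_wd_def)
    also have "\<dots> = (sc (Poly_Mapping.lookup p a) * rw N (unW a)) * (sc (Poly_Mapping.lookup q b) * rw N (unW b))"
      by (simp add: sc_mult rw_append mult.assoc) (metis sc_comm mult.assoc)
    finally show ?thesis by (simp add: rho_single)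
  qed
  have "rho N p * rho N q = rho N (\<Sum>a\<in>Poly_Mapping.keys p. ?sp a) * rho N (\<Sum>b\<in>Poly_Mapping.keys q. ?sq b)"
    by (simp flip: pm_decomp)
  also have "\<dots> = (\<Sum>a\<in>Poly_Mapping.keys p. \<Sum>b\<in>Poly_Mapping.keys q. rho N (?sp a) * rho N (?sq b))"
    by (simp only: rho_sum sum_distrib_left sum_distrib_right) (rule sum.swap)
  finally show ?thesis using 1 2 by simp
qed

lemma rho_one: "rho N 1 = (1 :: 'k::comm_ring_1 op)"
proof -
  have e: "(1::'k FA) = Poly_Mapping.single 0 1" by (simp add: poly_mapping_eqI lookup_one lookup_single)
  show ?thesis by (subst e) (simp add: rho_single zero_W sc_one del: single_one)
qed

lemma rho_sP: "rho N (sP c) = sc c" by (simp add: sP_def rho_single zero_W)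
lemma rho_xP: "rho N xP = Xo" by (simp add: xP_def rho_single sc_one)
lemma rho_yP: "rho N yP = Yo N" by (simp add: yP_def rho_single sc_one)
lemma rho_power: "rho N (p ^ n) = rho N p ^ n"
  by (induction n) (simp_all add: rho_one rho_mult)
lemma rho_neg: "rho N (- p) = - rho N p"
  by (metis add_eq_0_iff2 rho_add rho_zero)
lemma rho_diff: "rho N (p - q) = rho N p - rho N q"
  by (metis diff_conv_add_uminus rho_add rho_neg)

lemma rho_relP: "N \<ge> 1 \<Longrightarrow> rho N (relP N :: 'k::comm_ring_1 FA) = 0"
  by (simp add: relP_def rho_diff rho_mult rho_xP rho_yP rho_power YX_rel)

lemma rho_rel_ideal: assumes N: "N \<ge> 1"
  shows "f \<in> rel_ideal N \<Longrightarrow> rho N (toP (f :: 'k::comm_ring_1 fa)) = 0"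
proof (induction rule: rel_ideal.induct)
  case gen thus ?case by (metis frP_relP rho_relP toP_frP N)
next
  case zero thus ?case by (metis frP_zero rho_zero toP_frP)
next
  case (add f g) thus ?case by (simp add: toP_add rel_ideal_carrier rho_add)
next
  case (mult_left f u) thus ?case by (simp add: toP_mult rel_ideal_carrier rho_mult)
next
  case (mult_right f u) thus ?case by (simp add: toP_mult rel_ideal_carrier rho_mult)
qed

lemma rho_IN: "N \<ge> 1 \<Longrightarrow> p \<in> IN N \<Longrightarrow> rho N p = 0"
  using rho_rel_ideal[of N "frP p"] by (simp add: IN_def)


lemma sP_comm: "sP (c::'k::comm_ring_1) * p = p * sP c"
proof (rule poly_mapping_eqI)
  fix k :: wd
  obtain L where k: "k = W L" by (cases k)
  have a: "(\<Sum>n\<le>length L. Poly_Mapping.lookup (sP c) (W (take n L)) * Poly_Mapping.lookup p (W (drop n L)))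
      = c * Poly_Mapping.lookup p (W L)"
  proof (cases L)
    case Nil thus ?thesis by (simp add: sP_def lookup_single zero_W)
  next
    case (Cons b m)
    thus ?thesis by (simp add: sum.atMost_Suc_shift sP_def lookup_single zero_W when_def del: sum.atMost_Suc)
  qed
  have b: "(\<Sum>n\<le>length L. Poly_Mapping.lookup p (W (take n L)) * Poly_Mapping.lookup (sP c) (W (drop n L)))
      = Poly_Mapping.lookup p (W L) * c"
  proof -
    have "(\<Sum>n\<le>length L. Poly_Mapping.lookup p (W (take n L)) * Poly_Mapping.lookup (sP c) (W (drop n L)))
       = (\<Sum>n\<in>{length L}. Poly_Mapping.lookup p (W (take n L)) * Poly_Mapping.lookup (sP c) (W (drop n L)))"
      by (rule sum.mono_neutral_right) (auto simp: sP_def lookup_single zero_W when_def)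
    thus ?thesis by (simp add: sP_def lookup_single zero_W)
  qed
  show "Poly_Mapping.lookup (sP c * p) k = Poly_Mapping.lookup (p * sP c) k"
    unfolding k lookup_mult_W a b by (simp add: mult.commute)
qed

lemma sP_add: "sP (a + b) = sP a + sP b" by (simp add: sP_def single_add)
lemma sP_mult: "sP (a * b) = sP a * sP b" by (simp add: sP_def mult_single)
lemma sP_zero: "sP 0 = 0" by (simp add: sP_def)
lemma sP_one: "sP 1 = 1" by (simp add: sP_def)
lemma sP_of_nat: "sP (of_nat n) = of_nat n"
  by (induction n) (simp_all add: sP_zero sP_one sP_add)

lemma ring_step:
  fixes x y :: "'a::ring_1"
  shows "(y * x ^ e - x ^ e * y - of_nat e * x ^ (e + K)) * x + x ^ e * (y * x - x * y - x ^ Suc K)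
     = y * x ^ Suc e - x ^ Suc e * y - of_nat (Suc e) * x ^ (Suc e + K)"
proof -
  have h1: "y * x ^ e * x = y * x ^ Suc e" by (simp only: power_Suc2 mult.assoc)
  have h2: "x ^ e * x * y = x ^ Suc e * y" by (simp only: power_Suc2)
  have h3: "x ^ (e + K) * x = x ^ (Suc e + K)" by (metis add_Suc power_Suc2)
  have h4: "x ^ e * x ^ Suc K = x ^ (Suc e + K)" by (simp only: power_add[symmetric] add_Suc add_Suc_right)
  have "(y * x ^ e - x ^ e * y - of_nat e * x ^ (e + K)) * x + x ^ e * (y * x - x * y - x ^ Suc K)
     = y * x ^ e * x - x ^ e * y * x - of_nat e * (x ^ (e + K) * x) + (x ^ e * y * x - x ^ e * x * y - x ^ e * x ^ Suc K)"
    by (simp add: algebra_simps)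
  also have "\<dots> = y * x ^ Suc e - x ^ e * y * x - of_nat e * x ^ (Suc e + K) + (x ^ e * y * x - x ^ Suc e * y - x ^ (Suc e + K))"
    by (simp only: h1 h2 h3 h4)
  also have "\<dots> = y * x ^ Suc e - x ^ Suc e * y - of_nat (Suc e) * x ^ (Suc e + K)"
    by (simp add: algebra_simps of_nat_Suc)
  finally show ?thesis .
qed

lemma yx_comm_IN:
  assumes N: "N \<ge> 1"
  shows "yP * xP ^ e - xP ^ e * yP - of_nat e * xP ^ (e + (N - 1)) \<in> IN N"
proof (induction e)
  case 0 thus ?case by (simp add: IN_zero)
next
  case (Suc e)
  obtain K where K: "N = Suc K" using N by (cases N) auto
  let ?r = "yP * xP ^ e - xP ^ e * yP - of_nat e * xP ^ (e + (N - 1))"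
  have "yP * xP ^ Suc e - xP ^ Suc e * yP - of_nat (Suc e) * xP ^ (Suc e + (N - 1))
      = ?r * xP + xP ^ e * relP N"
    unfolding relP_def K diff_Suc_1 by (rule ring_step[symmetric])
  thus ?case using Suc IN_multR IN_multL IN_rel IN_add by metis
qed

definition mP :: "nat \<times> nat \<Rightarrow> 'k::comm_ring_1 FA" where "mP z = xP ^ fst z * yP ^ snd z"

definition spn :: "'k::comm_ring_1 FA set" where
  "spn = {s. \<exists>S c. finite S \<and> (\<forall>z. z \<notin> S \<longrightarrow> c z = 0) \<and> s = (\<Sum>z\<in>S. sP (c z) * mP z)}"

lemma spn_superset:
  assumes "finite S" "\<forall>z. z \<notin> S \<longrightarrow> c z = 0" "S \<subseteq> S'" "finite S'"
  shows "(\<Sum>z\<in>S. sP (c z) * mP z) = (\<Sum>z\<in>S'. sP (c z) * (mP z :: 'k::comm_ring_1 FA))"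
  by (rule sum.mono_neutral_left) (use assms in \<open>auto simp: sP_zero\<close>)

lemma spn_mP: "mP z \<in> spn"
  unfolding spn_def mem_Collect_eq
  by (rule exI[of _ "{z}"], rule exI[of _ "\<lambda>z'. if z' = z then 1 else 0"]) (simp add: sP_one)

lemma spn_zero: "0 \<in> spn"
  unfolding spn_def mem_Collect_eq by (rule exI[of _ "{}"], rule exI[of _ "\<lambda>z. 0"]) simp

lemma spn_add: assumes "a \<in> spn" "b \<in> spn" shows "a + b \<in> spn"
proof -
  obtain Sa ca where A: "finite Sa" "\<forall>z. z \<notin> Sa \<longrightarrow> ca z = 0" "a = (\<Sum>z\<in>Sa. sP (ca z) * mP z)"
    using assms(1) unfolding spn_def by blast
  obtain Sb cb where B: "finite Sb" "\<forall>z. z \<notin> Sb \<longrightarrow> cb z = 0" "b = (\<Sum>z\<in>Sb. sP (cb z) * mP z)"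
    using assms(2) unfolding spn_def by blast
  have "a = (\<Sum>z\<in>Sa \<union> Sb. sP (ca z) * mP z)" using A B by (simp add: spn_superset)
  moreover have "b = (\<Sum>z\<in>Sa \<union> Sb. sP (cb z) * mP z)" using A B by (simp add: spn_superset)
  ultimately have "a + b = (\<Sum>z\<in>Sa \<union> Sb. sP (ca z + cb z) * mP z)"
    by (simp add: sP_add distrib_right sum.distrib)
  thus ?thesis unfolding spn_def using A B
    by (intro CollectI exI[of _ "Sa \<union> Sb"] exI[of _ "\<lambda>z. ca z + cb z"]) auto
qed

lemma spn_smul: assumes "a \<in> spn" shows "sP k * a \<in> spn"
proof -
  obtain Sa ca where A: "finite Sa" "\<forall>z. z \<notin> Sa \<longrightarrow> ca z = 0" "a = (\<Sum>z\<in>Sa. sP (ca z) * mP z)"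
    using assms(1) unfolding spn_def by blast
  have "sP k * a = (\<Sum>z\<in>Sa. sP (k * ca z) * mP z)"
    by (simp add: A sum_distrib_left sP_mult mult.assoc)
  thus ?thesis unfolding spn_def using A
    by (intro CollectI exI[of _ Sa] exI[of _ "\<lambda>z. k * ca z"]) auto
qed

lemma spn_sum: "(\<And>a. a \<in> A \<Longrightarrow> f a \<in> spn) \<Longrightarrow> sum f A \<in> spn"
  by (induction A rule: infinite_finite_induct) (auto intro: spn_add spn_zero)

lemma spn_form: "s \<in> spn \<Longrightarrow> \<exists>S c. finite S \<and> (\<forall>z. z \<notin> S \<longrightarrow> c z = 0) \<and> s = (\<Sum>z\<in>S. sP (c z) * mP z)"
  unfolding spn_def by blast

lemma spn_xP: assumes "s \<in> spn" shows "xP * s \<in> spn"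
proof -
  obtain S c where A: "finite S" "s = (\<Sum>z\<in>S. sP (c z) * mP z)"
    using spn_form[OF assms] by blast
  have "xP * s = (\<Sum>z\<in>S. sP (c z) * mP (Suc (fst z), snd z))"
    by (simp add: A sum_distrib_left mP_def mult.assoc sP_comm)
  thus ?thesis by (auto intro!: spn_sum spn_smul spn_mP)
qed

lemma spn_yP: assumes N: "N \<ge> 1" and "s \<in> spn" shows "\<exists>s'\<in>spn. yP * s - s' \<in> IN N"
proof -
  obtain S c where A: "finite S" "s = (\<Sum>z\<in>S. sP (c z) * mP z)"
    using spn_form[OF assms(2)] by blast
  let ?t = "\<lambda>z. sP (c z) * (mP (fst z, Suc (snd z)) + of_nat (fst z) * mP (fst z + (N - 1), snd z))"
  let ?s' = "\<Sum>z\<in>S. ?t z"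
  have tt: "?t z = sP (c z) * mP (fst z, Suc (snd z)) + sP (c z * of_nat (fst z)) * mP (fst z + (N - 1), snd z)" for z
    by (simp add: sP_mult sP_of_nat distrib_left mult.assoc)
  have "?s' \<in> spn"
    unfolding tt by (intro spn_sum spn_add spn_smul spn_mP)
  moreover have "yP * s - ?s' = (\<Sum>z\<in>S. sP (c z) * ((yP * xP ^ fst z - xP ^ fst z * yP
       - of_nat (fst z) * xP ^ (fst z + (N - 1))) * yP ^ snd z))"
  proof -
    have t: "yP * (sP (c z) * mP z) - ?t z = sP (c z) * ((yP * xP ^ fst z - xP ^ fst z * yP
       - of_nat (fst z) * xP ^ (fst z + (N - 1))) * yP ^ snd z)" for z
    proof -
      have "yP * (sP (c z) * mP z) = sP (c z) * (yP * mP z)" by (metis mult.assoc sP_comm)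
      thus ?thesis by (simp add: mP_def algebra_simps)
    qed
    have "yP * s - ?s' = (\<Sum>z\<in>S. yP * (sP (c z) * mP z) - ?t z)"
      by (simp only: A sum_distrib_left sum_subtractf)
    also have "\<dots> = (\<Sum>z\<in>S. sP (c z) * ((yP * xP ^ fst z - xP ^ fst z * yP
       - of_nat (fst z) * xP ^ (fst z + (N - 1))) * yP ^ snd z))"
      by (rule sum.cong[OF refl], rule t)
    finally show ?thesis .
  qed
  moreover have "\<dots> \<in> IN N"
    by (intro IN_sum IN_multL IN_multR yx_comm_IN N)
  ultimately show ?thesis by (intro bexI[of _ "?s'"]) simp_all
qed

definition near :: "nat \<Rightarrow> 'k::comm_ring_1 FA \<Rightarrow> bool" where
  "near N p \<longleftrightarrow> (\<exists>s\<in>spn. p - s \<in> IN N)"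

lemma near_all: assumes N: "N \<ge> 1" shows "near N p"
proof -
  have single: "near N (Poly_Mapping.single (W l) k)" for l k
  proof (induction l)
    case Nil
    have "Poly_Mapping.single (W []) k = sP k * mP (0,0)" by (simp add: sP_def mP_def zero_W)
    thus ?case unfolding near_def using spn_smul[OF spn_mP] IN_zero by (metis diff_self)
  next
    case (Cons b l)
    then obtain s where s: "s \<in> spn" "Poly_Mapping.single (W l) k - s \<in> IN N"
      unfolding near_def by blast
    have e: "Poly_Mapping.single (W (b # l)) k = (if b then yP else xP) * Poly_Mapping.single (W l) k"
      by (simp add: xP_def yP_def mult_single)
    show ?case
    proof (cases b)
      case True
      obtain s' where s': "s' \<in> spn" "yP * s - s' \<in> IN N" using spn_yP[OF N s(1)] by blast
      have "yP * Poly_Mapping.single (W l) k - s' = yP * (Poly_Mapping.single (W l) k - s) + (yP * s - s')"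
        by (simp add: algebra_simps)
      thus ?thesis unfolding near_def e using True s s' by (metis IN_add IN_multL)
    next
      case False
      have "xP * Poly_Mapping.single (W l) k - xP * s = xP * (Poly_Mapping.single (W l) k - s)"
        by (simp add: algebra_simps)
      thus ?thesis unfolding near_def e using False s spn_xP[OF s(1)] by (metis IN_multL)
    qed
  qed
  have "near N (\<Sum>a\<in>A. Poly_Mapping.single a (Poly_Mapping.lookup p a))" if "finite A" for A
    using that
  proof (induction A rule: finite_induct)
    case empty thus ?case unfolding near_def using spn_zero IN_zero by force
  next
    case (insert a A)
    obtain s1 where 1: "s1 \<in> spn" "Poly_Mapping.single a (Poly_Mapping.lookup p a) - s1 \<in> IN N"
      using single[of "unW a"] unfolding near_def by auto
    obtain s2 where 2: "s2 \<in> spn" "(\<Sum>a\<in>A. Poly_Mapping.single a (Poly_Mapping.lookup p a)) - s2 \<in> IN N"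
      using insert unfolding near_def by blast
    have "(\<Sum>a\<in>insert a A. Poly_Mapping.single a (Poly_Mapping.lookup p a)) - (s1 + s2) =
       (Poly_Mapping.single a (Poly_Mapping.lookup p a) - s1) + ((\<Sum>a\<in>A. Poly_Mapping.single a (Poly_Mapping.lookup p a)) - s2)"
      using insert by (simp add: algebra_simps)
    thus ?case unfolding near_def using 1 2 spn_add IN_add by metis
  qed
  thus ?thesis by (metis finite_keys pm_decomp)
qed


definition ind :: "nat \<times> nat \<Rightarrow> nat \<times> nat \<Rightarrow> 'k::comm_ring_1" where
  "ind z = (\<lambda>z'. if z' = z then 1 else 0)"
definition nfo :: "'k::comm_ring_1 op \<Rightarrow> nat \<times> nat \<Rightarrow> 'k" where
  "nfo T = app T (ind (0,0))"
definition Mo :: "nat \<Rightarrow> nat \<times> nat \<Rightarrow> 'k::comm_ring_1 op" where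
  "Mo N z = Xo ^ fst z * Yo N ^ snd z"

lemma app_Yo_pow_ind: "app (Yo N ^ d) (ind (0,0)) = (ind (0,d) :: nat \<times> nat \<Rightarrow> 'k::comm_ring_1)"
proof (induction d)
  case 0 thus ?case by (simp add: app_one)
next
  case (Suc d)
  show ?case
  proof
    fix z :: "nat \<times> nat"
    obtain a b where z: "z = (a,b)" by (cases z)
    show "app (Yo N ^ Suc d) (ind (0,0)) z = (ind (0, Suc d) :: nat \<times> nat \<Rightarrow> 'k) z"
      by (simp add: app_times Suc app_Yo) (cases b; auto simp: z Yv_def ind_def)
  qed
qed

lemma nfo_Mo: "nfo (Mo N z) = (ind z :: nat \<times> nat \<Rightarrow> 'k::comm_ring_1)"
proof
  fix z' :: "nat \<times> nat"
  obtain e d where z: "z = (e,d)" by (cases z)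
  obtain a b where z': "z' = (a,b)" by (cases z')
  show "nfo (Mo N z) z' = (ind z :: nat \<times> nat \<Rightarrow> 'k) z'"
    by (simp add: nfo_def Mo_def app_times app_Yo_pow_ind app_Xo_pow) (auto simp: z z' ind_def)
qed

lemma rho_mP: "rho N (mP z) = Mo N z"
  by (simp add: mP_def Mo_def rho_mult rho_power rho_xP rho_yP)

lemma nfo_add: "nfo (S + T) = (\<lambda>z. nfo S z + nfo T z)" by (simp add: nfo_def app_plus)
lemma nfo_diff: "nfo (S - T) = (\<lambda>z. nfo S z - nfo T z)" by (simp add: nfo_def app_minus)
lemma nfo_neg: "nfo (- T) = (\<lambda>z. - nfo T z)" by (simp add: nfo_def app_uminus)
lemma nfo_zero: "nfo 0 = (\<lambda>z. 0)" by (simp add: nfo_def app_zero_op)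
lemma nfo_sc: "nfo (sc c * T) = (\<lambda>z. c * nfo T z)" by (simp add: nfo_def app_times app_sc)
lemma nfo_sum: "nfo (sum f A) = (\<lambda>z. \<Sum>a\<in>A. nfo (f a) z)" by (simp add: nfo_def app_sum)
lemma nfo_times: "nfo (S * T) = app S (nfo T)" by (simp add: nfo_def app_times)

lemma nfo_span:
  assumes "finite S" "\<forall>z. z \<notin> S \<longrightarrow> c z = 0"
  shows "nfo (\<Sum>z\<in>S. sc (c z) * Mo N z) = c"
proof
  fix z0
  have "nfo (\<Sum>z\<in>S. sc (c z) * Mo N z) z0 = (\<Sum>z\<in>S. c z * ind z z0)"
    by (simp add: nfo_sum nfo_sc nfo_Mo)
  also have "\<dots> = (\<Sum>z\<in>S. if z = z0 then c z else 0)"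
    by (rule sum.cong) (auto simp: ind_def)
  also have "\<dots> = c z0" using assms(1) assms(2)[rule_format, of z0] by (simp add: sum.delta')
  finally show "nfo (\<Sum>z\<in>S. sc (c z) * Mo N z) z0 = c z0" .
qed

lemma rho_spn_sum: "rho N (\<Sum>z\<in>S. sP (c z) * mP z) = (\<Sum>z\<in>S. sc (c z) * Mo N z)"
  by (simp add: rho_sum rho_mult rho_sP rho_mP)

lemma rho_inj: assumes N: "N \<ge> 1" and r: "rho N p = 0" shows "p \<in> IN N"
proof -
  obtain s where s: "s \<in> spn" "p - s \<in> IN N" using near_all[OF N] unfolding near_def by blast
  obtain S c where S: "finite S" "\<forall>z. z \<notin> S \<longrightarrow> c z = 0" "s = (\<Sum>z\<in>S. sP (c z) * mP z)"
    using spn_form[OF s(1)] by blast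
  have "rho N s = rho N p - rho N (p - s)" by (simp add: rho_diff)
  also have "\<dots> = 0" using r rho_IN[OF N s(2)] by simp
  finally have "c = (\<lambda>z. 0)" using nfo_span[OF S(1) S(2), of N] rho_spn_sum[of N c S]
    by (simp add: S(3) nfo_zero)
  hence "s = 0" using S(3) by (simp add: sP_zero)
  thus ?thesis using s(2) by simp
qed

definition Alg :: "nat \<Rightarrow> 'k::comm_ring_1 op set" where "Alg N = range (rho N)"

lemma Alg_span:
  assumes N: "N \<ge> 1" and T: "T \<in> Alg N"
  shows "\<exists>S. finite S \<and> (\<forall>z. z \<notin> S \<longrightarrow> nfo T z = 0) \<and> T = (\<Sum>z\<in>S. sc (nfo T z) * Mo N z)"
proof -
  obtain p where p: "T = rho N p" using T by (auto simp: Alg_def)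
  obtain s where s: "s \<in> spn" "p - s \<in> IN N" using near_all[OF N] unfolding near_def by blast
  obtain S c where S: "finite S" "\<forall>z. z \<notin> S \<longrightarrow> c z = 0" "s = (\<Sum>z\<in>S. sP (c z) * mP z)"
    using spn_form[OF s(1)] by blast
  have "rho N p = rho N s + rho N (p - s)" by (simp add: rho_diff)
  hence T2: "T = (\<Sum>z\<in>S. sc (c z) * Mo N z)" using rho_IN[OF N s(2)] p S(3) rho_spn_sum by simp
  hence "nfo T = c" using nfo_span[OF S(1) S(2)] by simp
  thus ?thesis using S T2 by auto
qed

lemma Alg_rho[simp]: "rho N p \<in> Alg N" by (simp add: Alg_def)
lemma Alg_add: "S \<in> Alg N \<Longrightarrow> T \<in> Alg N \<Longrightarrow> S + T \<in> Alg N"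
  by (auto simp: Alg_def rho_add[symmetric])
lemma Alg_mult: "S \<in> Alg N \<Longrightarrow> T \<in> Alg N \<Longrightarrow> S * T \<in> Alg N"
  by (auto simp: Alg_def rho_mult[symmetric])
lemma Alg_diff: "S \<in> Alg N \<Longrightarrow> T \<in> Alg N \<Longrightarrow> S - T \<in> Alg N"
  by (auto simp: Alg_def rho_diff[symmetric])
lemma Alg_neg: "T \<in> Alg N \<Longrightarrow> - T \<in> Alg N"
  by (auto simp: Alg_def rho_neg[symmetric])
lemma Alg_sc: "sc c \<in> Alg N" using Alg_rho[of N "sP c"] by (simp add: rho_sP)
lemma Alg_zero: "0 \<in> Alg N" using Alg_rho[of N 0] by (simp add: rho_zero)
lemma Alg_one: "1 \<in> Alg N" using Alg_rho[of N 1] by (simp add: rho_one)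
lemma Alg_X: "Xo \<in> Alg N" using Alg_rho[of N xP] by (simp add: rho_xP)
lemma Alg_Y: "Yo N \<in> Alg N" using Alg_rho[of N yP] by (simp add: rho_yP)
lemma Alg_pow: "T \<in> Alg N \<Longrightarrow> T ^ n \<in> Alg N"
  by (induction n) (simp_all add: Alg_one Alg_mult)
lemma Alg_Mo: "Mo N z \<in> Alg N" by (simp add: Mo_def Alg_mult Alg_pow Alg_X Alg_Y)
lemma Alg_sum: "(\<And>a. a \<in> A \<Longrightarrow> f a \<in> Alg N) \<Longrightarrow> sum f A \<in> Alg N"
  by (induction A rule: infinite_finite_induct) (auto intro: Alg_add Alg_zero)
lemma Alg_of_nat: "of_nat n \<in> Alg N" using Alg_sc[where c="of_nat n" and N=N] by (simp add: sc_of_nat)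

lemma Alg_eq:
  assumes N: "N \<ge> 1" and "S \<in> Alg N" "T \<in> Alg N" "nfo S = nfo T"
  shows "S = T"
proof -
  have D: "S - T \<in> Alg N" using assms by (simp add: Alg_diff)
  have "nfo (S - T) = (\<lambda>z. 0)" using assms(4) by (simp add: nfo_diff)
  then obtain F where "finite F" "S - T = (\<Sum>z\<in>F. sc 0 * Mo N z)"
    using Alg_span[OF N D] by auto
  hence "S - T = 0" by (simp add: sc_zero)
  thus ?thesis by simp
qed

lemma eqA_rho:
  assumes N: "N \<ge> 1" and "f \<in> fa_carrier" "g \<in> fa_carrier"
  shows "eqA N f g \<longleftrightarrow> rho N (toP f) = rho N (toP (g :: 'k::comm_ring_1 fa))"
proof
  assume "eqA N f g"
  hence "toP f - toP g \<in> IN N" using assms eqA_IN by blast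
  thus "rho N (toP f) = rho N (toP g)" using rho_IN[OF N, of "toP f - toP g"] by (simp add: rho_diff)
next
  assume "rho N (toP f) = rho N (toP g)"
  hence "rho N (toP f - toP g) = 0" by (simp add: rho_diff)
  thus "eqA N f g" using rho_inj[OF N] assms eqA_IN by blast
qed


definition deg :: "nat \<Rightarrow> nat \<times> nat \<Rightarrow> nat" where "deg N z = fst z + (N - 1) * snd z"
definition hv :: "nat \<Rightarrow> nat \<Rightarrow> (nat \<times> nat \<Rightarrow> 'k::zero) \<Rightarrow> bool" where
  "hv N p v \<longleftrightarrow> (\<forall>z. v z \<noteq> 0 \<longrightarrow> deg N z = p)"

lemma hv_Xv: assumes "hv N p v" shows "hv N (Suc p) (Xv v)"
  unfolding hv_def
proof (intro allI impI)
  fix z assume z: "Xv v z \<noteq> 0"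
  obtain a b where ab: "z = (a,b)" by (cases z)
  have "a \<noteq> 0" "v (a - 1, b) \<noteq> 0" using z by (auto simp: ab Xv_def split: if_splits)
  hence "deg N (a - 1, b) = p" using assms by (auto simp: hv_def)
  thus "deg N z = Suc p" using \<open>a \<noteq> 0\<close> by (auto simp: ab deg_def)
qed

lemma hv_Yv: assumes "hv N p v" shows "hv N (p + (N - 1)) (Yv N v)"
  unfolding hv_def
proof (intro allI impI)
  fix z assume z: "Yv N v z \<noteq> 0"
  obtain a b where ab: "z = (a,b)" by (cases z)
  show "deg N z = p + (N - 1)"
  proof (cases "b \<noteq> 0 \<and> v (a, b - 1) \<noteq> 0")
    case True
    hence "deg N (a, b - 1) = p" using assms by (auto simp: hv_def)
    thus ?thesis using True by (cases b) (auto simp: ab deg_def)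
  next
    case False
    hence "N - 1 \<le> a \<and> v (a - (N - 1), b) \<noteq> 0" using z by (auto simp: ab Yv_def split: if_splits)
    hence "N - 1 \<le> a" "deg N (a - (N - 1), b) = p" using assms by (auto simp: hv_def)
    thus ?thesis by (auto simp: ab deg_def)
  qed
qed

lemma wdeg_Cons: "wdeg N (b # l) = (if b then N - 1 else 1) + wdeg N l"
  by (cases b) (simp_all add: wdeg_def)

lemma hv_rw: "hv N p v \<Longrightarrow> hv N (wdeg N l + p) (app (rw N l) v)"
proof (induction l arbitrary: p v)
  case Nil thus ?case by (simp add: app_one wdeg_def)
next
  case (Cons b l)
  have h: "hv N (wdeg N l + p) (app (rw N l) v)" using Cons by blast
  show ?case
  proof (cases b)
    case True
    thus ?thesis using hv_Yv[OF h] by (simp add: app_times app_Yo wdeg_Cons add_ac)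
  next
    case False
    thus ?thesis using hv_Xv[OF h] by (simp add: app_times app_Xo wdeg_Cons)
  qed
qed

lemma hv_nfo_rw: "hv N (wdeg N l) (nfo (rw N l) :: nat \<times> nat \<Rightarrow> 'k::comm_ring_1)"
proof -
  have "hv N 0 (ind (0,0) :: nat \<times> nat \<Rightarrow> 'k)" by (simp add: hv_def ind_def deg_def)
  from hv_rw[OF this, of l] show ?thesis by (simp add: nfo_def)
qed

definition homo :: "nat \<Rightarrow> nat \<Rightarrow> 'k::comm_ring_1 op \<Rightarrow> bool" where
  "homo N p T \<longleftrightarrow> hv N p (nfo T)"

definition projF :: "nat \<Rightarrow> nat \<Rightarrow> 'k::zero fa \<Rightarrow> 'k fa" where
  "projF N p f = (\<lambda>l. if wdeg N l = p then f l else 0)"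

lemma projF_carrier: "f \<in> fa_carrier \<Longrightarrow> projF N p f \<in> fa_carrier"
  unfolding fa_carrier_def projF_def by (auto elim: rev_finite_subset)

lemma projF_homog: "fa_homog N p (projF N p f)"
  by (simp add: fa_homog_def projF_def)

lemma nfo_rho_toP:
  assumes "f \<in> fa_carrier" "finite S" "Poly_Mapping.keys (toP f) \<subseteq> S"
  shows "nfo (rho N (toP f)) = (\<lambda>z. \<Sum>w\<in>S. f (unW w) * nfo (rw N (unW w)) z)"
  by (simp add: rho_superset[OF assms(2,3)] nfo_sum nfo_sc lookup_toP[OF assms(1)])

lemma keys_toP_projF: "f \<in> fa_carrier \<Longrightarrow> Poly_Mapping.keys (toP (projF N p f)) \<subseteq> Poly_Mapping.keys (toP f)"
  by (auto simp: in_keys_iff lookup_toP projF_carrier) (simp add: projF_def split: if_splits)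

lemma nfo_proj:
  assumes f: "(f::'k::comm_ring_1 fa) \<in> fa_carrier"
  shows "nfo (rho N (toP (projF N p f))) = (\<lambda>z. if deg N z = p then nfo (rho N (toP f)) z else 0)"
proof
  fix z
  let ?S = "Poly_Mapping.keys (toP f)"
  have e1: "nfo (rho N (toP (projF N p f))) z = (\<Sum>w\<in>?S. projF N p f (unW w) * nfo (rw N (unW w)) z)"
    using nfo_rho_toP[OF projF_carrier[OF f] _ keys_toP_projF[OF f]] by simp
  have e2: "nfo (rho N (toP f)) z = (\<Sum>w\<in>?S. f (unW w) * nfo (rw N (unW w)) z)"
    using nfo_rho_toP[OF f, of ?S N] by simp
  have hw: "(nfo (rw N (unW w)) z :: 'k) \<noteq> 0 \<Longrightarrow> deg N z = wdeg N (unW w)" for w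
    using hv_nfo_rw[of N "unW w"] unfolding hv_def by blast
  show "nfo (rho N (toP (projF N p f))) z = (if deg N z = p then nfo (rho N (toP f)) z else 0)"
  proof (cases "deg N z = p")
    case True
    show ?thesis unfolding e1 e2 if_P[OF True]
    proof (rule sum.cong[OF refl])
      fix w show "projF N p f (unW w) * nfo (rw N (unW w)) z = f (unW w) * nfo (rw N (unW w)) z"
      proof -
        have "wdeg N (unW w) \<noteq> p \<Longrightarrow> (nfo (rw N (unW w)) z :: 'k) = 0" using hw[of w] True by auto
        thus ?thesis by (cases "wdeg N (unW w) = p") (simp_all add: projF_def)
      qed
    qed
  next
    case False
    show ?thesis unfolding e1 e2 if_not_P[OF False]
    proof (rule sum.neutral, rule ballI)
      fix w show "projF N p f (unW w) * nfo (rw N (unW w)) z = 0"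
      proof -
        have "wdeg N (unW w) = p \<Longrightarrow> (nfo (rw N (unW w)) z :: 'k) = 0" using hw[of w] False by auto
        thus ?thesis by (cases "wdeg N (unW w) = p") (simp_all add: projF_def)
      qed
    qed
  qed
qed

lemma homog_homo:
  assumes h: "h \<in> fa_carrier" "fa_homog N p h"
  shows "homo N p (rho N (toP h))"
proof -
  have "projF N p h = h" using h(2) by (auto simp: projF_def fa_homog_def fun_eq_iff)
  hence "nfo (rho N (toP h)) = (\<lambda>z. if deg N z = p then nfo (rho N (toP h)) z else 0)"
    using nfo_proj[OF h(1), of N p] by simp
  thus ?thesis unfolding homo_def hv_def by (metis)
qed

lemma homogA_iff:
  assumes N: "N \<ge> 1" and f: "f \<in> fa_carrier"
  shows "homogA N p f \<longleftrightarrow> homo N p (rho N (toP (f :: 'k::comm_ring_1 fa)))"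
proof
  assume "homogA N p f"
  then obtain h where h: "h \<in> fa_carrier" "fa_homog N p h" "eqA N f h" by (auto simp: homogA_def)
  have "rho N (toP f) = rho N (toP h)" using eqA_rho[OF N f h(1)] h(3) by simp
  thus "homo N p (rho N (toP f))" using homog_homo[OF h(1,2)] by simp
next
  assume H: "homo N p (rho N (toP f))"
  have "nfo (rho N (toP (projF N p f))) = nfo (rho N (toP f))"
    using H unfolding nfo_proj[OF f] homo_def hv_def by (intro ext) auto
  hence "rho N (toP (projF N p f)) = rho N (toP f)" by (intro Alg_eq[OF N]) auto
  hence "eqA N f (projF N p f)" using eqA_rho[OF N f projF_carrier[OF f]] by simp
  thus "homogA N p f" unfolding homogA_def using projF_carrier[OF f] projF_homog by blast
qed


definition suppin :: "(nat \<times> nat \<Rightarrow> bool) \<Rightarrow> 'k::comm_ring_1 op \<Rightarrow> bool" where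
  "suppin P T \<longleftrightarrow> (\<forall>z. \<not> P z \<longrightarrow> nfo T z = 0)"

lemma suppin_add: "suppin P S \<Longrightarrow> suppin P T \<Longrightarrow> suppin P (S + T)"
  by (simp add: suppin_def nfo_add)
lemma suppin_diff: "suppin P S \<Longrightarrow> suppin P T \<Longrightarrow> suppin P (S - T)"
  by (simp add: suppin_def nfo_diff)
lemma suppin_neg: "suppin P T \<Longrightarrow> suppin P (- T)"
  by (simp add: suppin_def nfo_neg)
lemma suppin_sc: "suppin P T \<Longrightarrow> suppin P (sc c * T)"
  by (simp add: suppin_def nfo_sc)
lemma suppin_zero: "suppin P 0"
  by (simp add: suppin_def nfo_zero)
lemma suppin_sum: "(\<And>a. a \<in> A \<Longrightarrow> suppin P (f a)) \<Longrightarrow> suppin P (sum f A)"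
  by (induction A rule: infinite_finite_induct) (auto intro: suppin_add suppin_zero)
lemma suppin_mono: "suppin Q T \<Longrightarrow> (\<And>z. Q z \<Longrightarrow> P z) \<Longrightarrow> suppin P T"
  by (auto simp: suppin_def)
lemma suppin_Mo: "P z \<Longrightarrow> suppin P (Mo N z)"
  by (auto simp: suppin_def nfo_Mo ind_def)
lemma suppin_conj: "suppin P T \<Longrightarrow> suppin Q T \<Longrightarrow> suppin (\<lambda>z. P z \<and> Q z) T"
  by (auto simp: suppin_def)
lemma suppin_False: "suppin (\<lambda>z. False) T \<longleftrightarrow> nfo T = (\<lambda>z. 0)"
  by (auto simp: suppin_def)

lemma suppin_Xpow: "suppin P T \<Longrightarrow> suppin (\<lambda>z. k \<le> fst z \<and> P (fst z - k, snd z)) (Xo ^ k * T)"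
  by (auto simp: suppin_def nfo_times app_Xo_pow)

lemma suppin_Y: "suppin P T \<Longrightarrow>
   suppin (\<lambda>z. (0 < snd z \<and> P (fst z, snd z - 1)) \<or> (N - 1 \<le> fst z \<and> P (fst z - (N - 1), snd z))) (Yo N * T)"
  by (auto simp: suppin_def nfo_times app_Yo Yv_def)

lemma homo_suppin: "homo N p T \<longleftrightarrow> suppin (\<lambda>z. deg N z = p) T"
  by (auto simp: homo_def hv_def suppin_def)

lemma Alg_expand:
  assumes N: "N \<ge> 1" and T: "T \<in> Alg N"
  obtains S where "finite S" "\<forall>z. z \<notin> S \<longrightarrow> nfo T z = 0" "T = (\<Sum>z\<in>S. sc (nfo T z) * Mo N z)"
  using Alg_span[OF N T] by blast

lemma comm_pow_gen:
  fixes x y :: "'a::ring_1"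
  assumes r: "y * x - x * y = x ^ Suc K"
  shows "y * x ^ e - x ^ e * y = of_nat e * x ^ (e + K)"
proof (induction e)
  case 0 thus ?case by simp
next
  case (Suc e)
  have "(y * x ^ e - x ^ e * y - of_nat e * x ^ (e + K)) * x + x ^ e * (y * x - x * y - x ^ Suc K)
     = y * x ^ Suc e - x ^ Suc e * y - of_nat (Suc e) * x ^ (Suc e + K)"
    by (rule ring_step)
  thus ?case using Suc r by simp
qed

lemma YX_pow: "N \<ge> 1 \<Longrightarrow> Yo N * Xo ^ e - Xo ^ e * Yo N = of_nat e * (Xo ^ (e + (N - 1)) :: 'k::comm_ring_1 op)"
  using comm_pow_gen[of "Yo N" Xo "N - 1" e] YX_rel[of N] by simp

lemma of_nat_op_comm: "of_nat n * (T :: 'k::comm_ring_1 op) = T * of_nat n"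
  by (simp add: mult_of_nat_commute)


definition Cm :: "nat \<Rightarrow> nat \<Rightarrow> 'k::comm_ring_1 op" where
  "Cm N n = Yo N ^ n * Xo - Xo * Yo N ^ n"

definition Rm :: "nat \<Rightarrow> nat \<Rightarrow> 'k::comm_ring_1 op" where
  "Rm N n = Cm N (Suc n) - of_nat (Suc n) * Mo N (N, n)"

lemma Cm_0: "Cm N 0 = 0" by (simp add: Cm_def)

lemma Cm_Suc: "N \<ge> 1 \<Longrightarrow> Cm N (Suc n) = Yo N * Cm N n + Xo ^ N * (Yo N ^ n :: 'k::comm_ring_1 op)"
proof -
  assume N: "N \<ge> 1"
  have "Cm N (Suc n) = Yo N * Cm N n + (Yo N * Xo - Xo * Yo N) * (Yo N ^ n :: 'k op)"
    by (simp add: Cm_def algebra_simps)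
  thus ?thesis by (simp only: YX_rel[OF N])
qed

lemma of_nat_left: "A * (of_nat k * B) = of_nat k * (A * (B :: 'k::comm_ring_1 op))"
  by (metis mult.assoc mult_of_nat_commute)

lemma Rm_0: "N \<ge> 1 \<Longrightarrow> Rm N 0 = (0 :: 'k::comm_ring_1 op)"
  by (simp add: Rm_def Cm_Suc Cm_0 Mo_def)

lemma Rm_Suc: assumes N: "N \<ge> 1"
  shows "Rm N (Suc n) = Yo N * Rm N n + of_nat (Suc n) * (of_nat N * (Mo N (N + (N - 1), n) :: 'k::comm_ring_1 op))"
proof -
  let ?Y = "Yo N :: 'k op" and ?X = "Xo :: 'k op"
  have C1: "Cm N (Suc n) = Rm N n + of_nat (Suc n) * Mo N (N, n)" by (simp add: Rm_def)
  have "Rm N (Suc n) = ?Y * Cm N (Suc n) + ?X ^ N * ?Y ^ Suc n - of_nat (Suc (Suc n)) * (?X ^ N * ?Y ^ Suc n)"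
    by (simp add: Rm_def Cm_Suc[OF N] Mo_def)
  also have "\<dots> = ?Y * Rm N n + of_nat (Suc n) * ((?Y * ?X ^ N - ?X ^ N * ?Y) * ?Y ^ n)"
    unfolding C1 by (simp add: distrib_left of_nat_left Mo_def algebra_simps)
  also have "?Y * ?X ^ N - ?X ^ N * ?Y = of_nat N * ?X ^ (N + (N - 1))"
    using YX_pow[OF N, of N] by simp
  finally show ?thesis by (simp add: Mo_def mult.assoc)
qed

lemma suppin_of_nat: "suppin P T \<Longrightarrow> suppin P (of_nat k * T)"
  using suppin_sc[of P T "of_nat k"] by (simp add: sc_of_nat)

lemma Rm_supp: assumes N: "N \<ge> 1"
  shows "suppin (\<lambda>z. snd z < n \<and> N \<le> fst z \<and> deg N z = N + n * (N - 1)) (Rm N n :: 'k::comm_ring_1 op)"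
proof (induction n)
  case 0 thus ?case by (simp add: Rm_0[OF N] suppin_zero)
next
  case (Suc n)
  obtain K where K: "N = Suc K" using N by (cases N) auto
  have a: "suppin (\<lambda>z. snd z < Suc n \<and> N \<le> fst z \<and> deg N z = N + Suc n * (N - 1)) (Yo N * Rm N n :: 'k op)"
  proof (rule suppin_mono[OF suppin_Y[OF Suc]])
    fix z :: "nat \<times> nat"
    obtain a b where z: "z = (a,b)" by (cases z)
    assume "(0 < snd z \<and> snd (fst z, snd z - 1) < n \<and> N \<le> fst (fst z, snd z - 1) \<and>
         deg N (fst z, snd z - 1) = N + n * (N - 1)) \<or>
        (N - 1 \<le> fst z \<and> snd (fst z - (N - 1), snd z) < n \<and> N \<le> fst (fst z - (N - 1), snd z) \<and>
         deg N (fst z - (N - 1), snd z) = N + n * (N - 1))"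
    thus "snd z < Suc n \<and> N \<le> fst z \<and> deg N z = N + Suc n * (N - 1)"
    proof
      assume h: "0 < snd z \<and> snd (fst z, snd z - 1) < n \<and> N \<le> fst (fst z, snd z - 1) \<and>
         deg N (fst z, snd z - 1) = N + n * (N - 1)"
      then obtain b' where b: "b = Suc b'" using z by (cases b) auto
      show ?thesis using h unfolding z b K by (simp add: deg_def algebra_simps)
    next
      assume h: "N - 1 \<le> fst z \<and> snd (fst z - (N - 1), snd z) < n \<and> N \<le> fst (fst z - (N - 1), snd z) \<and>
         deg N (fst z - (N - 1), snd z) = N + n * (N - 1)"
      thus ?thesis unfolding z K by (auto simp: deg_def algebra_simps)
    qed
  qed
  have b: "suppin (\<lambda>z. snd z < Suc n \<and> N \<le> fst z \<and> deg N z = N + Suc n * (N - 1))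
     (of_nat (Suc n) * (of_nat N * (Mo N (N + (N - 1), n) :: 'k op)))"
    by (intro suppin_of_nat suppin_Mo) (simp add: K deg_def algebra_simps)
  show ?case unfolding Rm_Suc[OF N] by (rule suppin_add[OF a b])
qed

lemma Cm_Suc_decomp: "Cm N (Suc n) = of_nat (Suc n) * Mo N (N, n) + Rm N n"
  by (simp add: Rm_def)

lemma Cm_supp: assumes N: "N \<ge> 1"
  shows "suppin (\<lambda>z. snd z < d \<and> N \<le> fst z \<and> deg N z + N - 1 = N + d * (N - 1)) (Cm N d :: 'k::comm_ring_1 op)"
proof (cases d)
  case 0 thus ?thesis by (simp add: Cm_0 suppin_zero)
next
  case (Suc n)
  obtain K where K: "N = Suc K" using N by (cases N) auto
  have a: "suppin (\<lambda>z. snd z < d \<and> N \<le> fst z \<and> deg N z + N - 1 = N + d * (N - 1)) (of_nat (Suc n) * (Mo N (N, n) :: 'k op))"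
    by (intro suppin_of_nat suppin_Mo) (simp add: K Suc deg_def algebra_simps)
  have b: "suppin (\<lambda>z. snd z < d \<and> N \<le> fst z \<and> deg N z + N - 1 = N + d * (N - 1)) (Rm N n :: 'k op)"
    by (rule suppin_mono[OF Rm_supp[OF N]]) (auto simp: Suc K algebra_simps)
  show ?thesis unfolding Suc Cm_Suc_decomp by (rule suppin_add[OF a[unfolded Suc] b[unfolded Suc]])
qed

lemma Mo_comm: "Mo N (e, d) * Xo - Xo * Mo N (e, d) = Xo ^ e * (Cm N d :: 'k::comm_ring_1 op)"
  by (simp add: Mo_def Cm_def algebra_simps power_commutes flip: mult.assoc)


lemma XC_supp: assumes N: "N \<ge> 1"
  shows "suppin (\<lambda>z. snd z < d \<and> N + e \<le> fst z \<and> deg N z = Suc (deg N (e, d)))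
     (Xo ^ e * (Cm N d :: 'k::comm_ring_1 op))"
proof (rule suppin_mono[OF suppin_Xpow[OF Cm_supp[OF N]]])
  fix z :: "nat \<times> nat"
  obtain K where K: "N = Suc K" using N by (cases N) auto
  obtain a b where z: "z = (a,b)" by (cases z)
  assume "e \<le> fst z \<and> snd (fst z - e, snd z) < d \<and> N \<le> fst (fst z - e, snd z) \<and>
          deg N (fst z - e, snd z) + N - 1 = N + d * (N - 1)"
  thus "snd z < d \<and> N + e \<le> fst z \<and> deg N z = Suc (deg N (e, d))"
    unfolding z K by (auto simp: deg_def algebra_simps)
qed

lemma sum_comm_X:
  "(sum f A) * Xo - Xo * (sum f A) = (\<Sum>a\<in>A. f a * Xo - Xo * (f a :: 'k::comm_ring_1 op))"
  by (simp add: sum_distrib_left sum_distrib_right sum_subtractf)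

lemma sc_comm_X: "(sc c * M) * Xo - Xo * (sc c * M) = sc c * (M * Xo - Xo * (M :: 'k::comm_ring_1 op))"
  by (simp add: algebra_simps mult.assoc) (metis mult.assoc sc_comm)

lemma comm_gen:
  assumes N: "N \<ge> 1" and Q: "Q \<in> Alg N" and P: "suppin P Q"
  shows "suppin (\<lambda>z. \<exists>z'. P z' \<and> snd z < snd z' \<and> N + fst z' \<le> fst z \<and> deg N z = Suc (deg N z'))
           (Q * Xo - Xo * (Q :: 'k::comm_ring_1 op))"
proof -
  obtain S where S: "finite S" "Q = (\<Sum>z\<in>S. sc (nfo Q z) * Mo N z)"
    using Alg_expand[OF N Q] by blast
  define T where "T = (\<Sum>z\<in>S. sc (nfo Q z) * Mo N z)"
  have QT: "Q = T" using S(2) by (simp add: T_def)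
  show ?thesis
  proof (unfold QT, unfold T_def sum_comm_X, rule suppin_sum)
    fix z' assume "z' \<in> S"
    obtain e d where z': "z' = (e,d)" by (cases z')
    show "suppin (\<lambda>z. \<exists>z'. P z' \<and> snd z < snd z' \<and> N + fst z' \<le> fst z \<and> deg N z = Suc (deg N z'))
       (sc (nfo Q z') * Mo N z' * Xo - Xo * (sc (nfo Q z') * Mo N z'))"
    proof (cases "nfo Q z' = 0")
      case True thus ?thesis by (simp add: sc_zero suppin_zero)
    next
      case False
      hence "P z'" using P unfolding suppin_def by blast
      show ?thesis unfolding sc_comm_X z' Mo_comm
        by (rule suppin_sc, rule suppin_mono[OF XC_supp[OF N]]) (use \<open>P z'\<close> z' in auto)
    qed
  qed
qed

lemma comm_J: "N \<ge> 1 \<Longrightarrow> Q \<in> Alg N \<Longrightarrow> suppin (\<lambda>z. N \<le> fst z) (Q * Xo - Xo * (Q :: 'k::comm_ring_1 op))"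
  by (rule suppin_mono[OF comm_gen[of N Q "\<lambda>z. True"]]) (auto simp: suppin_def)

lemma comm_snd: "N \<ge> 1 \<Longrightarrow> Q \<in> Alg N \<Longrightarrow> suppin (\<lambda>z. snd z < m) Q \<Longrightarrow>
    suppin (\<lambda>z. Suc (snd z) < m) (Q * Xo - Xo * (Q :: 'k::comm_ring_1 op))"
  by (rule suppin_mono[OF comm_gen[of N Q]]) auto

lemma comm_homo: "N \<ge> 1 \<Longrightarrow> Q \<in> Alg N \<Longrightarrow> homo N p Q \<Longrightarrow>
    homo N (Suc p) (Q * Xo - Xo * (Q :: 'k::comm_ring_1 op))"
  unfolding homo_suppin by (rule suppin_mono[OF comm_gen[of N Q]]) auto

lemma lead_coeff: assumes N: "N \<ge> 1"
  shows "nfo (Xo ^ e * Cm N (Suc n)) (e + N, n) = (of_nat (Suc n) :: 'k::comm_ring_1)"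
proof -
  have r: "nfo (Xo ^ e * Rm N n) (e + N, n) = (0::'k)"
    using suppin_Xpow[OF Rm_supp[OF N], of e] by (auto simp: suppin_def)
  have "Xo ^ e * Cm N (Suc n) = of_nat (Suc n) * Mo N (e + N, n) + Xo ^ e * (Rm N n :: 'k op)"
    by (simp add: Cm_Suc_decomp distrib_left of_nat_left Mo_def power_add mult.assoc del: of_nat_Suc)
  thus ?thesis using r
    by (simp add: nfo_add nfo_Mo ind_def flip: sc_of_nat) (simp add: nfo_sc nfo_Mo ind_def)
qed


lemma hv_app_Ypow: "hv N q v \<Longrightarrow> hv N (q + d * (N - 1)) (app (Yo N ^ d) v)"
proof (induction d arbitrary: q v)
  case 0 thus ?case by (simp add: app_one)
next
  case (Suc d)
  have "hv N (q + d * (N - 1)) (app (Yo N ^ d) v)" using Suc by blast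
  from hv_Yv[OF this] have "hv N (q + d * (N - 1) + (N - 1)) (app (Yo N ^ Suc d) v)"
    by (simp add: app_times app_Yo)
  moreover have "q + d * (N - 1) + (N - 1) = q + Suc d * (N - 1)" by simp
  ultimately show ?case by metis
qed

lemma hv_app_Xpow: "hv N q v \<Longrightarrow> hv N (q + e) (app (Xo ^ e) v)"
proof (induction e arbitrary: q v)
  case 0 thus ?case by (simp add: app_one)
next
  case (Suc e)
  have "hv N (q + e) (app (Xo ^ e) v)" using Suc by blast
  from hv_Xv[OF this] show ?case by (simp add: app_times app_Xo)
qed

lemma homo_Mo_mult: "homo N q S \<Longrightarrow> homo N (deg N z + q) (Mo N z * S)"
  unfolding homo_def nfo_times Mo_def app_times
  using hv_app_Xpow[OF hv_app_Ypow, of N q "nfo S" "snd z" "fst z"]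
  by (simp add: deg_def algebra_simps)

lemma homo_add: "homo N p S \<Longrightarrow> homo N p T \<Longrightarrow> homo N p (S + T)"
  by (simp add: homo_suppin suppin_add)
lemma homo_diff: "homo N p S \<Longrightarrow> homo N p T \<Longrightarrow> homo N p (S - T)"
  by (simp add: homo_suppin suppin_diff)
lemma homo_sc: "homo N p T \<Longrightarrow> homo N p (sc c * T)"
  by (simp add: homo_suppin suppin_sc)
lemma homo_of_nat: "homo N p T \<Longrightarrow> homo N p (of_nat k * T)"
  by (simp add: homo_suppin suppin_of_nat)
lemma homo_zero: "homo N p 0"
  by (simp add: homo_suppin suppin_zero)
lemma homo_sum: "(\<And>a. a \<in> A \<Longrightarrow> homo N p (f a)) \<Longrightarrow> homo N p (sum f A)"
  by (simp add: homo_suppin suppin_sum)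

lemma homo_mult:
  assumes N: "N \<ge> 1" and T: "T \<in> Alg N" and hT: "homo N p T" and hS: "homo N q S"
  shows "homo N (p + q) (T * S)"
proof -
  obtain F where F: "finite F" "T = (\<Sum>z\<in>F. sc (nfo T z) * Mo N z)"
    using Alg_expand[OF N T] by blast
  have "T * S = (\<Sum>z\<in>F. sc (nfo T z) * (Mo N z * S))"
    by (subst F(2)) (simp add: sum_distrib_right mult.assoc)
  also have "homo N (p + q) \<dots>"
  proof (rule homo_sum)
    fix z assume "z \<in> F"
    show "homo N (p + q) (sc (nfo T z) * (Mo N z * S))"
    proof (cases "nfo T z = 0")
      case True thus ?thesis by (simp add: sc_zero homo_zero)
    next
      case False
      hence "deg N z = p" using hT unfolding homo_def hv_def by blast
      thus ?thesis using homo_Mo_mult[OF hS, of z] by (simp add: homo_sc)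
    qed
  qed
  finally show ?thesis .
qed

lemma homo_Mo: "homo N (deg N z) (Mo N z)"
  by (simp add: homo_def hv_def nfo_Mo ind_def)
lemma homo_Xpow: "homo N e (Xo ^ e)"
  using homo_Mo[of N "(e,0)"] by (simp add: Mo_def deg_def)
lemma homo_Ypow: "homo N (d * (N - 1)) (Yo N ^ d)"
  using homo_Mo[of N "(0,d)"] by (simp add: Mo_def deg_def mult.commute)
lemma homo_X: "homo N 1 Xo" using homo_Xpow[of N 1] by simp
lemma homo_Y: "homo N (N - 1) (Yo N)" using homo_Ypow[of N 1] by simp


definition cm :: "'k::comm_ring_1 op \<Rightarrow> 'k op" where "cm Q = Q * Xo - Xo * Q"

lemma cm_add: "cm (A + B) = cm A + cm B" by (simp add: cm_def algebra_simps)
lemma cm_zero: "cm 0 = 0" by (simp add: cm_def)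

lemma Alg_eq0: "N \<ge> 1 \<Longrightarrow> T \<in> Alg N \<Longrightarrow> suppin (\<lambda>z. False) T \<Longrightarrow> T = 0"
  by (rule Alg_eq) (auto simp: suppin_False nfo_zero Alg_zero)

lemma red:
  fixes T :: "'k::field_char_0 op"
  assumes N: "N \<ge> 1"
  shows "T \<in> Alg N \<Longrightarrow> suppin (\<lambda>z. deg N z = p \<and> snd z < m) T \<Longrightarrow>
    \<exists>\<Psi>\<in>Alg N. homo N (p - 1) (\<Psi> * Yo N) \<and>
       suppin (\<lambda>z. deg N z = p \<and> fst z < N) (T - cm (\<Psi> * Yo N))"
proof (induction m arbitrary: T)
  case 0
  hence "T = 0" using Alg_eq0[OF N] by (auto elim: suppin_mono)
  thus ?case by (intro bexI[of _ 0]) (simp_all add: homo_zero cm_zero suppin_zero Alg_zero)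
next
  case (Suc m)
  obtain K where K: "N = Suc K" using N by (cases N) auto
  define z0 where "z0 = (p - m * K, m)"
  define c where "c = nfo T z0"
  have uniq: "z = z0" if "deg N z = p" "snd z = m" for z
    using that by (cases z) (auto simp: z0_def deg_def K)
  define T1 where "T1 = T - sc c * Mo N z0"
  have T1A: "T1 \<in> Alg N" by (simp add: T1_def Alg_diff Alg_mult Alg_sc Alg_Mo Suc.prems)
  have sT1: "suppin (\<lambda>z. deg N z = p \<and> snd z < m) T1"
    unfolding suppin_def
  proof (intro allI impI)
    fix z assume z: "\<not> (deg N z = p \<and> snd z < m)"
    show "nfo T1 z = 0"
    proof (cases "z = z0")
      case True thus ?thesis by (simp add: T1_def nfo_diff nfo_sc nfo_Mo ind_def c_def)
    next
      case False
      hence "\<not> (deg N z = p \<and> snd z = m)" using uniq by blast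
      hence "\<not> (deg N z = p \<and> snd z < Suc m)" using z by (auto simp: less_Suc_eq)
      hence "nfo T z = 0" using Suc.prems(2) unfolding suppin_def by blast
      thus ?thesis using False by (simp add: T1_def nfo_diff nfo_sc nfo_Mo ind_def)
    qed
  qed
  have dz0: "deg N z0 = p" if "c \<noteq> 0"
    using that Suc.prems(2) unfolding c_def suppin_def by blast
  show ?case
  proof (cases "c \<noteq> 0 \<and> N \<le> fst z0")
    case True
    define e where "e = fst z0"
    have eN: "N \<le> e" and de: "e + K * m = p" using True dz0 by (auto simp: e_def z0_def deg_def K)
    define \<Psi>0 where "\<Psi>0 = sc (c / of_nat (Suc m)) * Mo N (e - N, m)"
    have P0A: "\<Psi>0 \<in> Alg N" by (simp add: \<Psi>0_def Alg_mult Alg_sc Alg_Mo)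
    have P0Y: "\<Psi>0 * Yo N = sc (c / of_nat (Suc m)) * Mo N (e - N, Suc m)"
      by (simp add: \<Psi>0_def Mo_def mult.assoc power_commutes)
    have XC: "Xo ^ (e - N) * Cm N (Suc m) = of_nat (Suc m) * Mo N z0 + Xo ^ (e - N) * (Rm N m :: 'k op)"
    proof -
      have z0e: "z0 = (e, m)" by (simp add: e_def z0_def)
      have "Xo ^ (e - N) * (Xo ^ N * Yo N ^ m) = (Xo ^ (e - N + N) * Yo N ^ m :: 'k op)"
        by (simp add: power_add mult.assoc)
      also have "e - N + N = e" using eN by simp
      finally have "Xo ^ (e - N) * (Xo ^ N * Yo N ^ m) = (Mo N z0 :: 'k op)"
        by (simp add: Mo_def z0e)
      thus ?thesis by (simp add: Cm_Suc_decomp distrib_left of_nat_left Mo_def del: of_nat_Suc)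
    qed
    have scc: "sc (c / of_nat (Suc m)) * (of_nat (Suc m) * M) = sc c * M" for M :: "'k op"
    proof -
      have x: "c / of_nat (Suc m) * of_nat (Suc m) = c"
        by (metis of_nat_neq_0 nonzero_divide_mult_cancel_right mult.commute divide_self_if
             times_divide_eq_left mult.right_neutral)
      have "sc (c / of_nat (Suc m)) * (of_nat (Suc m) * M) = sc (c / of_nat (Suc m)) * (sc (of_nat (Suc m)) * M)"
        by (simp only: sc_of_nat)
      also have "\<dots> = sc (c / of_nat (Suc m) * of_nat (Suc m)) * M"
        by (simp only: sc_mult mult.assoc)
      finally show ?thesis by (simp only: x)
    qed
    have cm0: "cm (\<Psi>0 * Yo N) = sc c * Mo N z0 + sc (c / of_nat (Suc m)) * (Xo ^ (e - N) * Rm N m)"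
      unfolding P0Y cm_def sc_comm_X Mo_comm XC by (simp add: distrib_left scc del: of_nat_Suc)
    define T2 where "T2 = T - cm (\<Psi>0 * Yo N)"
    have T2A: "T2 \<in> Alg N"
      by (simp add: T2_def cm_def Alg_diff Alg_mult P0A Alg_Y Alg_X Suc.prems)
    have T2e: "T2 = T1 - sc (c / of_nat (Suc m)) * (Xo ^ (e - N) * Rm N m)"
      by (simp add: T2_def T1_def cm0)
    have sR: "suppin (\<lambda>z. deg N z = p \<and> snd z < m) (sc (c / of_nat (Suc m)) * (Xo ^ (e - N) * (Rm N m :: 'k op)))"
    proof (rule suppin_sc, rule suppin_mono[OF suppin_Xpow[OF Rm_supp[OF N]]])
      fix z :: "nat \<times> nat"
      assume "e - N \<le> fst z \<and> snd (fst z - (e - N), snd z) < m \<and> N \<le> fst (fst z - (e - N), snd z) \<and>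
          deg N (fst z - (e - N), snd z) = N + m * (N - 1)"
      thus "deg N z = p \<and> snd z < m" using eN de by (cases z) (auto simp: deg_def K algebra_simps)
    qed
    have sT2: "suppin (\<lambda>z. deg N z = p \<and> snd z < m) T2"
      unfolding T2e by (rule suppin_diff[OF sT1 sR])
    obtain \<Psi>1 where P1: "\<Psi>1 \<in> Alg N" "homo N (p - 1) (\<Psi>1 * Yo N)"
        "suppin (\<lambda>z. deg N z = p \<and> fst z < N) (T2 - cm (\<Psi>1 * Yo N))"
      using Suc.IH[OF T2A sT2] by blast
    have h0: "homo N (p - 1) (\<Psi>0 * Yo N)"
    proof -
      have "deg N (e - N, Suc m) = p - 1" using eN de by (simp add: deg_def K algebra_simps)
      thus ?thesis unfolding P0Y using homo_sc[OF homo_Mo[of N "(e - N, Suc m)"]] by simp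
    qed
    have "T - cm ((\<Psi>0 + \<Psi>1) * Yo N) = T2 - cm (\<Psi>1 * Yo N)"
      by (simp add: T2_def distrib_right cm_add)
    thus ?thesis using P0A P1 h0
      by (intro bexI[of _ "\<Psi>0 + \<Psi>1"]) (simp_all add: Alg_add distrib_right homo_add)
  next
    case False
    obtain \<Psi>1 where P1: "\<Psi>1 \<in> Alg N" "homo N (p - 1) (\<Psi>1 * Yo N)"
        "suppin (\<lambda>z. deg N z = p \<and> fst z < N) (T1 - cm (\<Psi>1 * Yo N))"
      using Suc.IH[OF T1A sT1] by blast
    have eqT: "T - cm (\<Psi>1 * Yo N) = sc c * Mo N z0 + (T1 - cm (\<Psi>1 * Yo N))"
      by (simp add: T1_def)
    have sM: "suppin (\<lambda>z. deg N z = p \<and> fst z < N) (sc c * Mo N z0)"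
    proof (cases "c = 0")
      case True thus ?thesis by (simp add: sc_zero suppin_zero)
    next
      case cF: False
      thus ?thesis using False dz0 by (intro suppin_sc suppin_Mo) auto
    qed
    have "suppin (\<lambda>z. deg N z = p \<and> fst z < N) (T - cm (\<Psi>1 * Yo N))"
      unfolding eqT by (rule suppin_add[OF sM P1(3)])
    thus ?thesis using P1(1,2) by blast
  qed
qed


lemma cm_diff: "cm (A - B) = cm A - cm B" by (simp add: cm_def algebra_simps)
lemma cm_sc: "cm (sc c * M) = sc c * cm M" by (simp add: cm_def sc_comm_X)

lemma ker_step:
  fixes V :: "'k::field_char_0 op"
  assumes N: "N \<ge> 1" and VA: "V \<in> Alg N" and hV: "homo N q V" and cV: "cm V = 0"
    and sV: "suppin (\<lambda>z. snd z < Suc (Suc n)) V"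
  shows "suppin (\<lambda>z. snd z < Suc n) V"
proof -
  obtain K where K: "N = Suc K" using N by (cases N) auto
  define z0 where "z0 = (q - Suc n * K, Suc n)"
  define c where "c = nfo V z0"
  have uniq: "z = z0" if "deg N z = q" "snd z = Suc n" for z
    using that by (cases z) (auto simp: z0_def deg_def K)
  define V' where "V' = V - sc c * Mo N z0"
  have V'A: "V' \<in> Alg N" by (simp add: V'_def Alg_diff Alg_mult Alg_sc Alg_Mo VA)
  have sV': "suppin (\<lambda>z. snd z < Suc n) V'"
    unfolding suppin_def
  proof (intro allI impI)
    fix z :: "nat \<times> nat" assume z: "\<not> snd z < Suc n"
    show "nfo V' z = 0"
    proof (cases "z = z0")
      case True thus ?thesis by (simp add: V'_def nfo_diff nfo_sc nfo_Mo ind_def c_def)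
    next
      case False
      have "nfo V z = 0"
      proof (rule ccontr)
        assume nz: "nfo V z \<noteq> 0"
        hence "deg N z = q" using hV unfolding homo_def hv_def by blast
        moreover have "snd z < Suc (Suc n)" using nz sV unfolding suppin_def by blast
        ultimately have "z = z0" using z uniq by simp
        thus False using False by simp
      qed
      thus ?thesis using False by (simp add: V'_def nfo_diff nfo_sc nfo_Mo ind_def)
    qed
  qed
  have c0: "c = 0"
  proof (rule ccontr)
    assume cnz: "c \<noteq> 0"
    hence dz0: "deg N z0 = q" using hV unfolding homo_def hv_def c_def by blast
    define e where "e = fst z0"
    have z0e: "z0 = (e, Suc n)" by (simp add: e_def z0_def)
    have "0 = cm V" using cV by simp
    also have "\<dots> = sc c * (Xo ^ e * Cm N (Suc n)) + cm V'"
      by (simp add: V'_def cm_diff cm_sc z0e cm_def[of "Mo N _"] Mo_comm)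
    finally have "nfo (sc c * (Xo ^ e * Cm N (Suc n)) + cm V') (e + N, n) = 0"
      by (simp add: nfo_zero flip: cm_def)
    moreover have "nfo (cm V') (e + N, n) = 0"
      using comm_snd[OF N V'A sV'] unfolding cm_def suppin_def by auto
    ultimately have "c * of_nat (Suc n) = 0"
      by (simp add: nfo_add nfo_sc lead_coeff[OF N] del: of_nat_Suc)
    thus False using cnz by (simp del: of_nat_Suc)
  qed
  have "V = V'" by (simp add: V'_def c0 sc_zero)
  thus ?thesis using sV' by simp
qed

lemma ker:
  fixes V :: "'k::field_char_0 op"
  assumes N: "N \<ge> 1" and VA: "V \<in> Alg N" and hV: "homo N q V" and cV: "cm V = 0"
  shows "V = sc (nfo V (q, 0)) * Xo ^ q"
proof -
  obtain F where F: "finite F" "\<forall>z. z \<notin> F \<longrightarrow> nfo V z = 0" using Alg_expand[OF N VA] by blast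
  define B where "B = (\<Sum>z\<in>F. snd z)"
  have "suppin (\<lambda>z. snd z < Suc B) V"
    unfolding suppin_def
  proof (intro allI impI)
    fix z :: "nat \<times> nat" assume "\<not> snd z < Suc B"
    hence "z \<notin> F" using member_le_sum[of z F snd] F(1) by (auto simp: B_def)
    thus "nfo V z = 0" using F(2) by blast
  qed
  moreover have "suppin (\<lambda>z. snd z < Suc n) V \<longrightarrow> suppin (\<lambda>z. snd z < Suc 0) V" for n
    by (induction n) (auto intro: ker_step[OF N VA hV cV])
  ultimately have s0: "suppin (\<lambda>z. snd z < Suc 0) V" by blast
  show ?thesis
  proof (rule Alg_eq[OF N VA])
    show "sc (nfo V (q, 0)) * Xo ^ q \<in> Alg N" by (simp add: Alg_mult Alg_sc Alg_pow Alg_X)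
    have Xq: "Xo ^ q = (Mo N (q, 0) :: 'k op)" by (simp add: Mo_def)
    show "nfo V = nfo (sc (nfo V (q, 0)) * Xo ^ q)"
    proof
      fix z :: "nat \<times> nat"
      obtain a b where z: "z = (a,b)" by (cases z)
      show "nfo V z = nfo (sc (nfo V (q, 0)) * Xo ^ q) z"
      proof (cases "z = (q, 0)")
        case True thus ?thesis by (simp add: Xq nfo_sc nfo_Mo ind_def)
      next
        case False
        have "nfo V z = 0"
        proof (rule ccontr)
          assume nz: "nfo V z \<noteq> 0"
          hence "deg N z = q" using hV unfolding homo_def hv_def by blast
          moreover have "snd z < Suc 0" using nz s0 unfolding suppin_def by blast
          ultimately show False using False by (simp add: z deg_def)
        qed
        thus ?thesis using False by (simp add: Xq nfo_sc nfo_Mo ind_def)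
      qed
    qed
  qed
qed

lemma J_mult_X:
  assumes N: "N \<ge> 1" and TA: "T \<in> Alg N" and sT: "suppin (\<lambda>z. N \<le> fst z) T"
  shows "suppin (\<lambda>z. N \<le> fst z) (T * (Xo :: 'k::comm_ring_1 op))"
proof -
  have "T * Xo = Xo ^ 1 * T + (T * Xo - Xo * T)" by simp
  moreover have "suppin (\<lambda>z. N \<le> fst z) (Xo ^ 1 * T)"
    by (rule suppin_mono[OF suppin_Xpow[OF sT]]) auto
  ultimately show ?thesis using suppin_add comm_J[OF N TA] by metis
qed

lemma YX_J: assumes N: "N \<ge> 1"
  shows "suppin (\<lambda>z. N \<le> fst z) (Yo N ^ m * Xo ^ r - Xo ^ r * (Yo N ^ m :: 'k::comm_ring_1 op))"
proof (induction r)
  case 0 thus ?case by (simp add: suppin_zero)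
next
  case (Suc r)
  let ?D = "Yo N ^ m * Xo ^ r - Xo ^ r * (Yo N ^ m :: 'k op)"
  have e: "Yo N ^ m * Xo ^ Suc r - Xo ^ Suc r * Yo N ^ m = ?D * Xo + Xo ^ r * (Yo N ^ m * Xo - Xo * Yo N ^ m)"
    by (simp add: power_Suc2 algebra_simps del: power_Suc)
  have a: "suppin (\<lambda>z. N \<le> fst z) (?D * Xo)"
    by (rule J_mult_X[OF N _ Suc]) (simp add: Alg_diff Alg_mult Alg_pow Alg_X Alg_Y)
  have b: "suppin (\<lambda>z. N \<le> fst z) (Xo ^ r * (Yo N ^ m * Xo - Xo * (Yo N ^ m :: 'k op)))"
    by (rule suppin_mono[OF suppin_Xpow[OF comm_J[OF N]]]) (auto simp: Alg_pow Alg_Y)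
  show ?case unfolding e by (rule suppin_add[OF a b])
qed

lemma nfo_XYX: assumes N: "N \<ge> 1" and kr: "k + r < N"
  shows "nfo (Xo ^ k * Yo N ^ m * Xo ^ r) (k + r, m) = (1 :: 'k::comm_ring_1)"
proof -
  let ?D = "Yo N ^ m * Xo ^ r - Xo ^ r * (Yo N ^ m :: 'k op)"
  have e: "Xo ^ k * Yo N ^ m * Xo ^ r = Mo N (k + r, m) + Xo ^ k * ?D"
    by (simp add: Mo_def algebra_simps power_add mult.assoc)
  have "nfo (Xo ^ k * ?D) (k + r, m) = 0"
  proof -
    have "\<not> (k \<le> k + r \<and> N \<le> k + r - k)" using kr by auto
    thus ?thesis using suppin_Xpow[OF YX_J[OF N, where m=m and r=r], where k=k]
      unfolding suppin_def by (metis fst_conv snd_conv)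
  qed
  thus ?thesis unfolding e by (simp add: nfo_add nfo_Mo ind_def)
qed


definition isDer :: "nat \<Rightarrow> ('k::comm_ring_1 op \<Rightarrow> 'k op) \<Rightarrow> bool" where
  "isDer N \<Delta> \<longleftrightarrow> (\<forall>T\<in>Alg N. \<Delta> T \<in> Alg N) \<and>
     (\<forall>S\<in>Alg N. \<forall>T\<in>Alg N. \<Delta> (S + T) = \<Delta> S + \<Delta> T \<and> \<Delta> (S * T) = \<Delta> S * T + S * \<Delta> T) \<and>
     (\<forall>c. \<forall>T\<in>Alg N. \<Delta> (sc c * T) = sc c * \<Delta> T)"

lemma isDerD:
  assumes "isDer N \<Delta>"
  shows "T \<in> Alg N \<Longrightarrow> \<Delta> T \<in> Alg N"
    and "S \<in> Alg N \<Longrightarrow> T \<in> Alg N \<Longrightarrow> \<Delta> (S + T) = \<Delta> S + \<Delta> T"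
    and "S \<in> Alg N \<Longrightarrow> T \<in> Alg N \<Longrightarrow> \<Delta> (S * T) = \<Delta> S * T + S * \<Delta> T"
    and "T \<in> Alg N \<Longrightarrow> \<Delta> (sc c * T) = sc c * \<Delta> T"
  using assms unfolding isDer_def by blast+

lemma der_zero: "isDer N \<Delta> \<Longrightarrow> \<Delta> 0 = 0"
  using isDerD(4)[of N \<Delta> 0 0] by (simp add: Alg_zero sc_zero)

lemma der_sum: "isDer N \<Delta> \<Longrightarrow> (\<And>a. a \<in> A \<Longrightarrow> f a \<in> Alg N) \<Longrightarrow> \<Delta> (sum f A) = (\<Sum>a\<in>A. \<Delta> (f a))"
proof (induction A rule: infinite_finite_induct)
  case (infinite A) thus ?case by (simp add: der_zero)
next
  case empty thus ?case by (simp add: der_zero)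
next
  case (insert a A)
  thus ?case by (simp add: isDerD(2) Alg_sum)
qed

lemma der_diff: "isDer N \<Delta> \<Longrightarrow> S \<in> Alg N \<Longrightarrow> T \<in> Alg N \<Longrightarrow> \<Delta> (S - T) = \<Delta> S - \<Delta> T"
proof -
  assume D: "isDer N \<Delta>" and S: "S \<in> Alg N" and T: "T \<in> Alg N"
  have e: "S - T = S + sc (-1) * T" by (simp add: sc_neg sc_one)
  have TA: "sc (-1) * T \<in> Alg N" by (simp add: Alg_mult Alg_sc T)
  have "\<Delta> (S + sc (-1) * T) = \<Delta> S + sc (-1) * \<Delta> T"
    using isDerD(2)[OF D S TA] isDerD(4)[OF D T] by simp
  thus ?thesis unfolding e by (simp add: sc_neg sc_one)
qed

lemma der_pow: assumes D: "isDer N \<Delta>" and T: "T \<in> Alg N"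
  shows "\<Delta> (T ^ n) = (\<Sum>k<n. T ^ k * \<Delta> T * T ^ (n - 1 - k))"
proof (induction n)
  case 0 thus ?case using der_zero[OF D] isDerD(3)[OF D Alg_one Alg_one] by simp
next
  case (Suc n)
  have "\<Delta> (T ^ Suc n) = \<Delta> T * T ^ n + T * \<Delta> (T ^ n)"
    by (simp add: isDerD(3)[OF D T Alg_pow[OF T]])
  also have "\<dots> = \<Delta> T * T ^ n + (\<Sum>k<n. T ^ Suc k * \<Delta> T * T ^ (n - Suc k))"
    by (simp add: Suc sum_distrib_left mult.assoc)
  also have "\<dots> = (\<Sum>k<Suc n. T ^ k * \<Delta> T * T ^ (Suc n - 1 - k))"
    by (simp add: sum.lessThan_Suc_shift del: sum.lessThan_Suc)
  finally show ?case .
qed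

lemma der_ext:
  assumes N: "N \<ge> 1" and D: "isDer N \<Delta>" and X0: "\<Delta> Xo = 0" and Y0: "\<Delta> (Yo N) = 0"
    and T: "T \<in> Alg N"
  shows "\<Delta> T = 0"
proof -
  have Xp: "\<Delta> (Xo ^ e) = 0" for e using der_pow[OF D Alg_X, of e] X0 by simp
  have Yp: "\<Delta> (Yo N ^ d) = 0" for d using der_pow[OF D Alg_Y, of d] Y0 by simp
  have M: "\<Delta> (Mo N z) = 0" for z
    using isDerD(3)[OF D Alg_pow[OF Alg_X] Alg_pow[OF Alg_Y]] Xp Yp by (simp add: Mo_def)
  obtain F where F: "finite F" "T = (\<Sum>z\<in>F. sc (nfo T z) * Mo N z)" using Alg_expand[OF N T] by blast
  have "\<Delta> T = (\<Sum>z\<in>F. \<Delta> (sc (nfo T z) * Mo N z))"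
    by (subst F(2), rule der_sum[OF D]) (simp add: Alg_mult Alg_sc Alg_Mo)
  also have "\<dots> = 0" by (simp add: isDerD(4)[OF D Alg_Mo] M)
  finally show ?thesis .
qed

lemma isDer_ad: assumes A: "A \<in> Alg N" shows "isDer N (\<lambda>T. A * T - T * A)"
  unfolding isDer_def
  by (auto simp: Alg_diff Alg_mult A algebra_simps) (metis mult.assoc sc_comm)+

lemma isDer_diff: "isDer N D1 \<Longrightarrow> isDer N D2 \<Longrightarrow> isDer N (\<lambda>T. D1 T - D2 T)"
  unfolding isDer_def by (auto simp: Alg_diff algebra_simps)

lemma isDer_scale: "isDer N D1 \<Longrightarrow> isDer N (\<lambda>T. sc a * D1 T)"
  unfolding isDer_def
  by (auto simp: Alg_mult Alg_sc algebra_simps) (metis mult.assoc sc_comm, metis mult.assoc sc_comm sc_mult mult.commute)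

lemma der_homo:
  assumes N: "N \<ge> 1" and D: "isDer N \<Delta>"
    and hX: "homo N (Suc l) (\<Delta> Xo)" and hY: "homo N (l + (N - 1)) (\<Delta> (Yo N))"
    and T: "T \<in> Alg N" and hT: "homo N p T"
  shows "homo N (p + l) (\<Delta> T)"
proof -
  have Xp: "homo N (e + l) (\<Delta> (Xo ^ e))" for e
  proof (induction e)
    case 0 thus ?case using der_pow[OF D Alg_X, of 0] by (simp add: homo_zero)
  next
    case (Suc e)
    have "\<Delta> (Xo ^ Suc e) = \<Delta> Xo * Xo ^ e + Xo * \<Delta> (Xo ^ e)"
      by (simp add: isDerD(3)[OF D Alg_X Alg_pow[OF Alg_X]])
    moreover have "homo N (Suc e + l) (\<Delta> Xo * Xo ^ e)"
      using homo_mult[OF N isDerD(1)[OF D Alg_X] hX homo_Xpow[of N e]] by (simp add: algebra_simps)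
    moreover have "homo N (Suc e + l) (Xo * \<Delta> (Xo ^ e))"
      using homo_mult[OF N Alg_X homo_X Suc] by simp
    ultimately show ?case by (simp add: homo_add)
  qed
  have Yp: "homo N (d * (N - 1) + l) (\<Delta> (Yo N ^ d))" for d
  proof (induction d)
    case 0 thus ?case using der_pow[OF D Alg_Y, of 0] by (simp add: homo_zero)
  next
    case (Suc d)
    have "\<Delta> (Yo N ^ Suc d) = \<Delta> (Yo N) * Yo N ^ d + Yo N * \<Delta> (Yo N ^ d)"
      by (simp add: isDerD(3)[OF D Alg_Y Alg_pow[OF Alg_Y]])
    moreover have "homo N (Suc d * (N - 1) + l) (\<Delta> (Yo N) * Yo N ^ d)"
      using homo_mult[OF N isDerD(1)[OF D Alg_Y] hY homo_Ypow[of N d]] by (simp only: mult_Suc add_ac)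
    moreover have "homo N (Suc d * (N - 1) + l) (Yo N * \<Delta> (Yo N ^ d))"
      using homo_mult[OF N Alg_Y homo_Y Suc] by (simp only: mult_Suc add_ac)
    ultimately show ?case by (simp add: homo_add)
  qed
  have M: "homo N (deg N z + l) (\<Delta> (Mo N z))" for z
  proof -
    have "\<Delta> (Mo N z) = \<Delta> (Xo ^ fst z) * Yo N ^ snd z + Xo ^ fst z * \<Delta> (Yo N ^ snd z)"
      by (simp add: Mo_def isDerD(3)[OF D Alg_pow[OF Alg_X] Alg_pow[OF Alg_Y]])
    moreover have "homo N (deg N z + l) (\<Delta> (Xo ^ fst z) * Yo N ^ snd z)"
      using homo_mult[OF N isDerD(1)[OF D Alg_pow[OF Alg_X]] Xp[of "fst z"] homo_Ypow[of N "snd z"]]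
      by (simp add: deg_def algebra_simps)
    moreover have "homo N (deg N z + l) (Xo ^ fst z * \<Delta> (Yo N ^ snd z))"
      using homo_mult[OF N Alg_pow[OF Alg_X] homo_Xpow[of N "fst z"] Yp[of "snd z"]]
      by (simp add: deg_def algebra_simps)
    ultimately show ?thesis by (simp add: homo_add)
  qed
  obtain F where F: "finite F" "T = (\<Sum>z\<in>F. sc (nfo T z) * Mo N z)" using Alg_expand[OF N T] by blast
  have "\<Delta> T = (\<Sum>z\<in>F. sc (nfo T z) * \<Delta> (Mo N z))"
    by (subst F(2), subst der_sum[OF D]) (simp_all add: Alg_mult Alg_sc Alg_Mo isDerD(4)[OF D Alg_Mo])
  also have "homo N (p + l) \<dots>"
  proof (rule homo_sum)
    fix z assume "z \<in> F"
    show "homo N (p + l) (sc (nfo T z) * \<Delta> (Mo N z))"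
    proof (cases "nfo T z = 0")
      case True thus ?thesis by (simp add: sc_zero homo_zero)
    next
      case False
      hence "deg N z = p" using hT unfolding homo_def hv_def by blast
      thus ?thesis using homo_sc[OF M[of z]] by simp
    qed
  qed
  finally show ?thesis .
qed


lemma class_arith:
  fixes K i j a b :: nat
  assumes K: "K \<ge> 1" and i: "1 \<le> i" "i \<le> K" and a: "a \<le> K" and e: "a + K * b = i + K * j"
  shows "(a = i \<and> b = j) \<or> (a = 0 \<and> b = Suc j)"
proof (cases "b \<le> j")
  case True
  show ?thesis
  proof (cases "b < j")
    case True
    hence "K * Suc b \<le> K * j" by (intro mult_le_mono2) simp
    hence "K * b + K \<le> K * j" by simp
    thus ?thesis using e a i by linarith
  next
    case False
    hence "b = j" using True by simp
    thus ?thesis using e by simp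
  qed
next
  case False
  show ?thesis
  proof (cases "b = Suc j")
    case True
    thus ?thesis using e i by simp
  next
    case F2: False
    hence "Suc (Suc j) \<le> b" using False by simp
    hence "K * Suc (Suc j) \<le> K * b" by (intro mult_le_mono2)
    hence "K * j + K + K \<le> K * b" by simp
    thus ?thesis using e a i K by linarith
  qed
qed

lemma core:
  fixes \<Delta> Dd :: "'k::field_char_0 op \<Rightarrow> 'k op"
  assumes N2: "N \<ge> 2" and l1: "l \<ge> 1" and lij: "l + 1 = i + j * (N - 1)" and i1: "1 \<le> i" and iN: "i \<le> N - 1"
    and DE: "isDer N \<Delta>" and hE: "\<And>p T. T \<in> Alg N \<Longrightarrow> homo N p T \<Longrightarrow> homo N (p + l) (\<Delta> T)"
    and DD: "isDer N Dd" and DX: "Dd Xo = Xo ^ i * Yo N ^ j" and hDY: "homo N (l + (N - 1)) (Dd (Yo N))"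
  shows "\<exists>c. \<exists>A\<in>Alg N. \<forall>T\<in>Alg N. \<Delta> T = sc c * Dd T + (A * T - T * A)"
proof -
  have N: "N \<ge> 1" using N2 by simp
  obtain K where K: "N = Suc K" using N by (cases N) auto
  have K1: "K \<ge> 1" using N2 K by simp
  define u where "u = \<Delta> Xo"
  have uA: "u \<in> Alg N" by (simp add: u_def isDerD(1)[OF DE Alg_X])
  have hu: "homo N (Suc l) u" using hE[OF Alg_X homo_X] by (simp add: u_def)
  obtain F where F: "finite F" "\<forall>z. z \<notin> F \<longrightarrow> nfo u z = 0" using Alg_expand[OF N uA] by blast
  define m where "m = Suc (\<Sum>z\<in>F. snd z)"
  have su: "suppin (\<lambda>z. deg N z = Suc l \<and> snd z < m) u"
    unfolding suppin_def
  proof (intro allI impI)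
    fix z :: "nat \<times> nat" assume z: "\<not> (deg N z = Suc l \<and> snd z < m)"
    show "nfo u z = 0"
    proof (rule ccontr)
      assume nz: "nfo u z \<noteq> 0"
      hence "deg N z = Suc l" using hu unfolding homo_def hv_def by blast
      moreover have "z \<in> F" using nz F(2) by blast
      hence "snd z < m" using member_le_sum[of z F snd] F(1) by (simp add: m_def)
      ultimately show False using z by blast
    qed
  qed
  obtain \<Psi> where P: "\<Psi> \<in> Alg N" "homo N (Suc l - 1) (\<Psi> * Yo N)"
      "suppin (\<lambda>z. deg N z = Suc l \<and> fst z < N) (u - cm (\<Psi> * Yo N))"
    using red[OF N uA su] by blast
  define W where "W = \<Psi> * Yo N"
  have WA: "W \<in> Alg N" by (simp add: W_def Alg_mult P(1) Alg_Y)
  have hW: "homo N l W" using P(2) by (simp add: W_def)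
  define L where "L = u - cm W"
  have LA: "L \<in> Alg N" by (simp add: L_def cm_def Alg_diff Alg_mult uA WA Alg_X)
  have sL: "suppin (\<lambda>z. deg N z = Suc l \<and> fst z < N) L" using P(3) by (simp add: L_def W_def)
  define \<alpha> where "\<alpha> = nfo L (i, j)"
  define \<beta> where "\<beta> = nfo L (0, Suc j)"
  have cls: "z = (i, j) \<or> z = (0, Suc j)" if "deg N z = Suc l" "fst z < N" for z
  proof -
    have "fst z + K * snd z = i + K * j" using that lij by (simp add: deg_def K algebra_simps)
    moreover have "fst z \<le> K" using that K by simp
    ultimately show ?thesis using class_arith[OF K1 i1 _ _] iN K by (cases z) auto
  qed
  have Lform: "L = sc \<alpha> * Mo N (i, j) + sc \<beta> * Mo N (0, Suc j)"
  proof (rule Alg_eq[OF N LA])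
    show "sc \<alpha> * Mo N (i, j) + sc \<beta> * Mo N (0, Suc j) \<in> Alg N"
      by (simp add: Alg_add Alg_mult Alg_sc Alg_Mo)
    show "nfo L = nfo (sc \<alpha> * Mo N (i, j) + sc \<beta> * Mo N (0, Suc j))"
    proof
      fix z :: "nat \<times> nat"
      show "nfo L z = nfo (sc \<alpha> * Mo N (i, j) + sc \<beta> * Mo N (0, Suc j)) z"
      proof (cases "z = (i, j) \<or> z = (0, Suc j)")
        case True thus ?thesis using i1 by (auto simp: nfo_add nfo_sc nfo_Mo ind_def \<alpha>_def \<beta>_def)
      next
        case False
        have "nfo L z = 0"
        proof (rule ccontr)
          assume "nfo L z \<noteq> 0"
          hence "deg N z = Suc l \<and> fst z < N" using sL unfolding suppin_def by blast
          thus False using cls False by blast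
        qed
        thus ?thesis using False by (auto simp: nfo_add nfo_sc nfo_Mo ind_def)
      qed
    qed
  qed
  define E1 where "E1 = (\<lambda>T. \<Delta> T - sc \<alpha> * Dd T - (W * T - T * W))"
  have DE1: "isDer N E1"
    unfolding E1_def by (intro isDer_diff isDer_scale isDer_ad DE DD WA)
  have E1X: "E1 Xo = sc \<beta> * Yo N ^ Suc j"
  proof -
    have "E1 Xo = L - sc \<alpha> * Mo N (i, j)"
      by (simp add: E1_def L_def u_def cm_def DX Mo_def)
    thus ?thesis by (simp add: Lform Mo_def)
  qed
  have E1A: "E1 T \<in> Alg N" if "T \<in> Alg N" for T using isDerD(1)[OF DE1 that] .
  have rel: "E1 (Yo N) * Xo + Yo N * E1 Xo - (E1 Xo * Yo N + Xo * E1 (Yo N)) = E1 (Xo ^ N)"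
  proof -
    have "E1 (Yo N * Xo - Xo * Yo N) = E1 (Yo N) * Xo + Yo N * E1 Xo - (E1 Xo * Yo N + Xo * E1 (Yo N))"
      by (simp add: der_diff[OF DE1] Alg_mult Alg_X Alg_Y isDerD(3)[OF DE1 Alg_Y Alg_X] isDerD(3)[OF DE1 Alg_X Alg_Y])
    from this[unfolded YX_rel[OF N]] show ?thesis by (rule sym)
  qed
  have YE: "Yo N * E1 Xo - E1 Xo * Yo N = 0"
  proof -
    have "Yo N * (sc \<beta> * Yo N ^ Suc j) = sc \<beta> * Yo N ^ Suc j * Yo N"
      by (simp add: mult.assoc power_commutes) (metis mult.assoc sc_comm power_Suc power_Suc2)
    thus ?thesis by (simp add: E1X)
  qed
  have cmE: "cm (E1 (Yo N)) = (\<Sum>k<N. Xo ^ k * E1 Xo * Xo ^ (N - 1 - k))"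
  proof -
    have "cm (E1 (Yo N)) = E1 (Yo N) * Xo + Yo N * E1 Xo - (E1 Xo * Yo N + Xo * E1 (Yo N))"
      using YE by (simp add: cm_def algebra_simps)
    thus ?thesis using rel der_pow[OF DE1 Alg_X, of N] by simp
  qed
  have b0: "\<beta> = 0"
  proof -
    have "nfo (cm (E1 (Yo N))) (N - 1, Suc j) = 0"
      using comm_J[OF N E1A[OF Alg_Y]] N unfolding cm_def suppin_def by auto
    moreover have "nfo (\<Sum>k<N. Xo ^ k * E1 Xo * Xo ^ (N - 1 - k)) (N - 1, Suc j) = of_nat N * \<beta>"
    proof -
      have t: "nfo (Xo ^ k * E1 Xo * Xo ^ (N - 1 - k)) (N - 1, Suc j) = \<beta>" if "k < N" for k
      proof -
        have "Xo ^ k * E1 Xo * Xo ^ (N - 1 - k) = sc \<beta> * (Xo ^ k * Yo N ^ Suc j * Xo ^ (N - 1 - k))"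
          by (simp add: E1X mult.assoc) (metis mult.assoc sc_comm)
        moreover have "nfo (Xo ^ k * Yo N ^ Suc j * Xo ^ (N - 1 - k)) (k + (N - 1 - k), Suc j) = (1::'k)"
          by (rule nfo_XYX[OF N]) (use that in auto)
        moreover have "k + (N - 1 - k) = N - 1" using that by simp
        ultimately show ?thesis by (simp add: nfo_sc)
      qed
      have "nfo (\<Sum>k<N. Xo ^ k * E1 Xo * Xo ^ (N - 1 - k)) (N - 1, Suc j) = (\<Sum>k<N. \<beta>)"
        unfolding nfo_sum by (rule sum.cong[OF refl], rule t, simp)
      thus ?thesis by simp
    qed
    ultimately have "of_nat N * \<beta> = 0" using cmE by simp
    thus ?thesis using N by simp
  qed
  have E1X0: "E1 Xo = 0" by (simp add: E1X b0 sc_zero)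
  have cmV: "cm (E1 (Yo N)) = 0" using cmE by (simp add: E1X0)
  define V where "V = E1 (Yo N)"
  have VA: "V \<in> Alg N" by (simp add: V_def E1A Alg_Y)
  have hV: "homo N (l + (N - 1)) V"
  proof -
    have a: "homo N (l + (N - 1)) (\<Delta> (Yo N))" using hE[OF Alg_Y homo_Y] by (simp add: add.commute)
    have b: "homo N (l + (N - 1)) (W * Yo N)" using homo_mult[OF N WA hW homo_Y] .
    have c: "homo N (l + (N - 1)) (Yo N * W)" using homo_mult[OF N Alg_Y homo_Y hW] by (simp add: add.commute)
    show ?thesis unfolding V_def E1_def by (intro homo_diff homo_sc a b c hDY)
  qed
  define q where "q = l + (N - 1)"
  define \<gamma> where "\<gamma> = nfo V (q, 0)"
  have Vf: "V = sc \<gamma> * Xo ^ q" using ker[OF N VA hV[folded q_def] cmV[folded V_def]] by (simp add: \<gamma>_def)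
  define Fo where "Fo = sc (- \<gamma> / of_nat l) * Xo ^ l"
  have FA: "Fo \<in> Alg N" by (simp add: Fo_def Alg_mult Alg_sc Alg_pow Alg_X)
  define E2 where "E2 = (\<lambda>T. E1 T - (Fo * T - T * Fo))"
  have DE2: "isDer N E2" unfolding E2_def by (intro isDer_diff isDer_ad DE1 FA)
  have E2X: "E2 Xo = 0"
    by (simp add: E2_def E1X0 Fo_def mult.assoc power_commutes) (metis mult.assoc sc_comm power_Suc power_Suc2)
  have E2Y: "E2 (Yo N) = 0"
  proof -
    have yx: "Yo N * Xo ^ l - Xo ^ l * Yo N = of_nat l * (Xo ^ q :: 'k op)"
      using YX_pow[OF N, of l] by (simp add: q_def)
    have "Fo * Yo N - Yo N * Fo = sc (- \<gamma> / of_nat l) * (Xo ^ l * Yo N - Yo N * Xo ^ l)"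
      by (simp add: Fo_def algebra_simps mult.assoc) (metis mult.assoc sc_comm)
    also have "\<dots> = sc (- \<gamma> / of_nat l) * (- (of_nat l * Xo ^ q))" using yx by (simp add: algebra_simps)
    also have "\<dots> = sc (\<gamma> / of_nat l) * (sc (of_nat l) * Xo ^ q)"
      by (simp add: sc_of_nat sc_neg)
    also have "\<dots> = sc (\<gamma> / of_nat l * of_nat l) * Xo ^ q"
      by (simp only: sc_mult mult.assoc)
    also have "\<gamma> / of_nat l * of_nat l = \<gamma>" using l1 by simp
    finally have "Fo * Yo N - Yo N * Fo = V" by (simp add: Vf)
    thus ?thesis by (simp add: E2_def V_def)
  qed
  have E20: "E2 T = 0" if "T \<in> Alg N" for T using der_ext[OF N DE2 E2X E2Y that] .
  show ?thesis
  proof (intro exI[of _ \<alpha>] bexI[of _ "W + Fo"] ballI)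
    show "W + Fo \<in> Alg N" by (simp add: Alg_add WA FA)
    fix T :: "'k op" assume T: "T \<in> Alg N"
    have "E2 T = 0" using E20[OF T] .
    thus "\<Delta> T = sc \<alpha> * Dd T + ((W + Fo) * T - T * (W + Fo))"
      by (simp add: E2_def E1_def algebra_simps)
  qed
qed


definition lift :: "nat \<Rightarrow> ('k::comm_ring_1 fa \<Rightarrow> 'k fa) \<Rightarrow> 'k op \<Rightarrow> 'k op" where
  "lift N E T = rho N (toP (E (frP (SOME p. rho N p = T))))"

lemma is_derA_D:
  assumes "is_derA N E"
  shows "f \<in> fa_carrier \<Longrightarrow> E f \<in> fa_carrier"
    and "f \<in> fa_carrier \<Longrightarrow> g \<in> fa_carrier \<Longrightarrow> eqA N f g \<Longrightarrow> eqA N (E f) (E g)"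
    and "f \<in> fa_carrier \<Longrightarrow> g \<in> fa_carrier \<Longrightarrow> eqA N (E (fa_add (fa_smul c f) g)) (fa_add (fa_smul c (E f)) (E g))"
    and "f \<in> fa_carrier \<Longrightarrow> g \<in> fa_carrier \<Longrightarrow> eqA N (E (fa_mul f g)) (fa_add (fa_mul (E f) g) (fa_mul f (E g)))"
  using assms unfolding is_derA_def by blast+

lemma lift_rho:
  assumes N: "N \<ge> 1" and E: "is_derA N E"
  shows "lift N E (rho N p) = rho N (toP (E (frP p :: 'k::comm_ring_1 fa)))"
proof -
  define p' where "p' = (SOME p'. rho N p' = rho N p)"
  have "rho N p' = rho N p" unfolding p'_def by (rule someI) (rule refl)
  hence "eqA N (frP p') (frP p)" using eqA_rho[OF N frP_carrier[of p'] frP_carrier[of p]] by simp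
  hence "eqA N (E (frP p')) (E (frP p))" using is_derA_D(2)[OF E] by simp
  hence "rho N (toP (E (frP p'))) = rho N (toP (E (frP p)))"
    using eqA_rho[OF N is_derA_D(1)[OF E frP_carrier] is_derA_D(1)[OF E frP_carrier]] by simp
  thus ?thesis by (simp add: lift_def p'_def)
qed

lemma fa_smul_one: "fa_smul 1 f = (f :: 'k::comm_ring_1 fa)" by (simp add: fa_smul_def)
lemma fa_add_zero: "fa_add f fa_zero = (f :: 'k::comm_ring_1 fa)" by (simp add: fa_add_def fa_zero_def)
lemma fa_zero_carrier: "(fa_zero :: 'k::comm_ring_1 fa) \<in> fa_carrier"
  by (metis frP_zero frP_carrier)
lemma toP_zero: "toP (fa_zero :: 'k::comm_ring_1 fa) = 0"
  by (metis frP_zero toP_frP)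

lemma rho_E_add:
  assumes N: "N \<ge> 1" and E: "is_derA N E" and f: "f \<in> fa_carrier" and g: "g \<in> fa_carrier"
  shows "rho N (toP (E (fa_add (fa_smul c f) g))) = sc c * rho N (toP (E f)) + rho N (toP (E (g :: 'k::comm_ring_1 fa)))"
proof -
  have "eqA N (E (fa_add (fa_smul c f) g)) (fa_add (fa_smul c (E f)) (E g))" using is_derA_D(3)[OF E f g] .
  moreover have c1: "fa_add (fa_smul c f) g \<in> fa_carrier" by (simp add: carrier_add carrier_smul f g)
  ultimately have "rho N (toP (E (fa_add (fa_smul c f) g))) = rho N (toP (fa_add (fa_smul c (E f)) (E g)))"
    using eqA_rho[OF N is_derA_D(1)[OF E c1]] by (simp add: carrier_add carrier_smul is_derA_D(1)[OF E] f g)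
  thus ?thesis
    by (simp add: toP_add toP_smul carrier_smul is_derA_D(1)[OF E] f g rho_add rho_mult rho_sP)
qed

lemma rho_E_zero:
  assumes N: "N \<ge> 1" and E: "is_derA N E"
  shows "rho N (toP (E (fa_zero :: 'k::comm_ring_1 fa))) = 0"
proof -
  have "rho N (toP (E fa_zero)) = sc 1 * rho N (toP (E fa_zero)) + rho N (toP (E (fa_zero :: 'k fa)))"
    using rho_E_add[OF N E fa_zero_carrier fa_zero_carrier, of 1] by (simp add: fa_smul_one fa_add_zero)
  thus ?thesis by (simp add: sc_one)
qed

lemma lift_isDer:
  assumes N: "N \<ge> 1" and E: "is_derA N (E :: 'k::comm_ring_1 fa \<Rightarrow> 'k fa)"
  shows "isDer N (lift N E)"
  unfolding isDer_def
proof (intro conjI ballI allI)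
  fix T :: "'k op" assume "T \<in> Alg N"
  thus "lift N E T \<in> Alg N" by (auto simp: Alg_def lift_def)
next
  fix S T :: "'k op" assume S: "S \<in> Alg N" and T: "T \<in> Alg N"
  obtain p q where pq: "S = rho N p" "T = rho N q" using S T by (auto simp: Alg_def)
  have "lift N E (S + T) = lift N E (rho N (p + q))" by (simp add: pq rho_add)
  also have "\<dots> = rho N (toP (E (fa_add (fa_smul 1 (frP p)) (frP q))))"
    by (simp add: lift_rho[OF N E] frP_add fa_smul_one)
  also have "\<dots> = lift N E S + lift N E T"
    by (simp add: rho_E_add[OF N E frP_carrier frP_carrier] sc_one pq lift_rho[OF N E])
  finally show "lift N E (S + T) = lift N E S + lift N E T" .
  have "lift N E (S * T) = rho N (toP (E (fa_mul (frP p) (frP q))))"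
    by (simp add: pq rho_mult[symmetric] lift_rho[OF N E] frP_mult)
  also have "\<dots> = rho N (toP (fa_add (fa_mul (E (frP p)) (frP q)) (fa_mul (frP p) (E (frP q)))))"
    using is_derA_D(4)[OF E frP_carrier frP_carrier, of p q]
      eqA_rho[OF N is_derA_D(1)[OF E carrier_mul[OF frP_carrier frP_carrier]]]
    by (simp add: carrier_add carrier_mul is_derA_D(1)[OF E])
  also have "\<dots> = lift N E S * T + S * lift N E T"
    by (simp add: toP_add toP_mult carrier_mul is_derA_D(1)[OF E] rho_add rho_mult pq lift_rho[OF N E])
  finally show "lift N E (S * T) = lift N E S * T + S * lift N E T" .
next
  fix c and T :: "'k op" assume T: "T \<in> Alg N"
  obtain q where q: "T = rho N q" using T by (auto simp: Alg_def)
  have "sc c * T = rho N (sP c * q)" by (simp add: q rho_mult rho_sP)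
  hence "lift N E (sc c * T) = rho N (toP (E (fa_add (fa_smul c (frP q)) fa_zero)))"
    by (simp add: lift_rho[OF N E] frP_smul fa_add_zero)
  also have "\<dots> = sc c * lift N E T"
    by (simp add: rho_E_add[OF N E frP_carrier fa_zero_carrier] rho_E_zero[OF N E] q lift_rho[OF N E])
  finally show "lift N E (sc c * T) = sc c * lift N E T" .
qed

lemma lift_homo:
  assumes N: "N \<ge> 1" and E: "is_derA N (E :: 'k::comm_ring_1 fa \<Rightarrow> 'k fa)" and H: "homog_derA N l E"
    and T: "T \<in> Alg N" and hT: "homo N p T"
  shows "homo N (p + l) (lift N E T)"
proof -
  obtain q where q: "T = rho N q" using T by (auto simp: Alg_def)
  have "homogA N p (frP q)" using homogA_iff[OF N frP_carrier[of q]] hT q by simp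
  hence "homogA N (p + l) (E (frP q))" using H frP_carrier unfolding homog_derA_def by blast
  hence "homo N (p + l) (rho N (toP (E (frP q))))" using homogA_iff[OF N is_derA_D(1)[OF E frP_carrier]] by simp
  thus ?thesis by (simp add: q lift_rho[OF N E])
qed


definition letterP :: "bool \<Rightarrow> 'k::comm_ring_1 FA" where "letterP c = (if c then yP else xP)"
definition wordP :: "bool list \<Rightarrow> 'k::comm_ring_1 FA" where "wordP l = Poly_Mapping.single (W l) 1"

lemma one_FA: "(1 :: 'k::comm_ring_1 FA) = Poly_Mapping.single 0 1"
  by (simp add: poly_mapping_eqI lookup_one lookup_single)

lemma wordP_Nil: "wordP [] = 1" by (simp add: wordP_def one_FA zero_W)
lemma wordP_append: "wordP (l1 @ l2) = wordP l1 * (wordP l2 :: 'k::comm_ring_1 FA)"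
  by (simp add: wordP_def mult_single)
lemma wordP_Cons: "wordP (c # l) = letterP c * (wordP l :: 'k::comm_ring_1 FA)"
  by (cases c) (simp_all add: letterP_def wordP_def xP_def yP_def mult_single)

fun Dw :: "'k::comm_ring_1 FA \<Rightarrow> 'k FA \<Rightarrow> bool list \<Rightarrow> 'k FA" where
  "Dw a b [] = 0"
| "Dw a b (c # l) = (if c then b else a) * wordP l + letterP c * Dw a b l"

lemma Dw_append: "Dw a b (l1 @ l2) = Dw a b l1 * wordP l2 + wordP l1 * Dw a b l2"
  by (induction l1) (simp_all add: wordP_Nil wordP_append wordP_Cons algebra_simps)

definition DL :: "'k::comm_ring_1 FA \<Rightarrow> 'k FA \<Rightarrow> 'k FA \<Rightarrow> 'k FA" where
  "DL a b p = (\<Sum>w\<in>Poly_Mapping.keys p. sP (Poly_Mapping.lookup p w) * Dw a b (unW w))"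

lemma DL_superset:
  assumes "finite S" "Poly_Mapping.keys p \<subseteq> S"
  shows "DL a b p = (\<Sum>w\<in>S. sP (Poly_Mapping.lookup p w) * Dw a b (unW w))"
  unfolding DL_def
  by (rule sum.mono_neutral_left[OF assms(1) assms(2)]) (simp add: in_keys_iff sP_zero)

lemma DL_add: "DL a b (p + q) = DL a b p + DL a b q"
proof -
  let ?S = "Poly_Mapping.keys p \<union> Poly_Mapping.keys q"
  have "DL a b (p + q) = (\<Sum>w\<in>?S. sP (Poly_Mapping.lookup (p+q) w) * Dw a b (unW w))"
    by (rule DL_superset) (simp_all add: keys_add[of p q])
  also have "\<dots> = (\<Sum>w\<in>?S. sP (Poly_Mapping.lookup p w) * Dw a b (unW w)) +
                  (\<Sum>w\<in>?S. sP (Poly_Mapping.lookup q w) * Dw a b (unW w))"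
    by (simp add: lookup_add sP_add distrib_right sum.distrib)
  also have "\<dots> = DL a b p + DL a b q"
    by (simp add: DL_superset[symmetric])
  finally show ?thesis .
qed

lemma DL_zero: "DL a b 0 = 0" by (simp add: DL_def)

lemma DL_sum: "DL a b (sum f A) = (\<Sum>x\<in>A. DL a b (f x))"
  by (induction A rule: infinite_finite_induct) (simp_all add: DL_zero DL_add)

lemma DL_single: "DL a b (Poly_Mapping.single w c) = sP c * Dw a b (unW w)"
proof -
  have "DL a b (Poly_Mapping.single w c) = (\<Sum>w'\<in>{w}. sP (Poly_Mapping.lookup (Poly_Mapping.single w c) w') * Dw a b (unW w'))"
    by (rule DL_superset) auto
  thus ?thesis by simp
qed

lemma lookup_sP_mult: "Poly_Mapping.lookup (sP c * p) w = c * Poly_Mapping.lookup p w"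
  using fun_cong[OF frP_smul[of c p], of "unW w"] by (simp add: frP_def fa_smul_def)

lemma DL_smul: "DL a b (sP c * p) = sP c * DL a b p"
proof -
  have "DL a b (sP c * p) = (\<Sum>w\<in>Poly_Mapping.keys p. sP (Poly_Mapping.lookup (sP c * p) w) * Dw a b (unW w))"
    by (rule DL_superset) (auto simp: in_keys_iff lookup_sP_mult)
  thus ?thesis by (simp add: DL_def lookup_sP_mult sP_mult sum_distrib_left mult.assoc)
qed

lemma sP_neg1: "sP (-1) * p = - (p :: 'k::comm_ring_1 FA)"
proof -
  have "sP (-1) = (-1 :: 'k FA)" by (simp add: sP_def single_uminus)
  thus ?thesis by simp
qed

lemma DL_neg: "DL a b (- p) = - DL a b p"
  using DL_smul[of a b "-1" p] by (simp add: sP_neg1)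
lemma DL_diff: "DL a b (p - q) = DL a b p - DL a b q"
proof -
  have "DL a b (p - q) = DL a b (p + - q)" by simp
  also have "\<dots> = DL a b p + - DL a b q" by (simp only: DL_add DL_neg)
  finally show ?thesis by simp
qed

lemma single_eq: "Poly_Mapping.single w c = sP c * (wordP (unW w) :: 'k::comm_ring_1 FA)"
  by (simp add: sP_def wordP_def mult_single)

lemma DL_wordP: "DL a b (wordP l) = Dw a b l"
  by (simp add: wordP_def DL_single sP_one)

lemma DL_mult: "DL a b (p * q) = DL a b p * q + p * DL a b q"
proof -
  let ?sp = "\<lambda>x. Poly_Mapping.single x (Poly_Mapping.lookup p x)"
  let ?sq = "\<lambda>y. Poly_Mapping.single y (Poly_Mapping.lookup q y)"
  have 2: "DL a b (?sp x * ?sq y) = DL a b (?sp x) * ?sq y + ?sp x * DL a b (?sq y)" for x y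
  proof -
    define \<alpha> where "\<alpha> = Poly_Mapping.lookup p x"
    define \<beta> where "\<beta> = Poly_Mapping.lookup q y"
    let ?Dx = "Dw a b (unW x)" and ?Dy = "Dw a b (unW y)" and ?wx = "wordP (unW x)" and ?wy = "wordP (unW y)"
    have "DL a b (?sp x * ?sq y) = sP (\<alpha> * \<beta>) * (?Dx * ?wy + ?wx * ?Dy)"
      by (simp add: mult_single DL_single Dw_append plus_wd_def \<alpha>_def \<beta>_def)
    also have "\<dots> = (sP \<alpha> * ?Dx) * (sP \<beta> * ?wy) + (sP \<alpha> * ?wx) * (sP \<beta> * ?Dy)"
    proof -
      have e1: "?Dx * (sP \<beta> * ?wy) = sP \<beta> * (?Dx * ?wy)" by (metis mult.assoc sP_comm)
      have e2: "?wx * (sP \<beta> * ?Dy) = sP \<beta> * (?wx * ?Dy)" by (metis mult.assoc sP_comm)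
      show ?thesis by (simp add: mult.assoc e1 e2 sP_mult distrib_left)
    qed
    finally have c: "DL a b (?sp x * ?sq y) = (sP \<alpha> * ?Dx) * (sP \<beta> * ?wy) + (sP \<alpha> * ?wx) * (sP \<beta> * ?Dy)" .
    have s1: "?sp x = sP \<alpha> * ?wx" by (simp add: single_eq \<alpha>_def)
    have s2: "?sq y = sP \<beta> * ?wy" by (simp add: single_eq \<beta>_def)
    have r: "DL a b (?sp x) * ?sq y + ?sp x * DL a b (?sq y) = (sP \<alpha> * ?Dx) * (sP \<beta> * ?wy) + (sP \<alpha> * ?wx) * (sP \<beta> * ?Dy)"
      by (simp only: s1 s2 DL_smul DL_wordP)
    show ?thesis using c r by simp
  qed
  have "DL a b (p * q) = DL a b ((\<Sum>x\<in>Poly_Mapping.keys p. ?sp x) * (\<Sum>y\<in>Poly_Mapping.keys q. ?sq y))"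
    by (simp flip: pm_decomp)
  also have "\<dots> = (\<Sum>x\<in>Poly_Mapping.keys p. \<Sum>y\<in>Poly_Mapping.keys q. DL a b (?sp x * ?sq y))"
    by (simp only: sum_distrib_left sum_distrib_right DL_sum) (rule sum.swap)
  also have "\<dots> = (\<Sum>x\<in>Poly_Mapping.keys p. \<Sum>y\<in>Poly_Mapping.keys q. DL a b (?sp x) * ?sq y + ?sp x * DL a b (?sq y))"
    by (simp only: 2)
  also have "\<dots> = DL a b (\<Sum>x\<in>Poly_Mapping.keys p. ?sp x) * (\<Sum>y\<in>Poly_Mapping.keys q. ?sq y)
       + (\<Sum>x\<in>Poly_Mapping.keys p. ?sp x) * DL a b (\<Sum>y\<in>Poly_Mapping.keys q. ?sq y)"
    by (simp add: DL_sum sum_distrib_left sum_distrib_right sum.distrib sum.swap[where A="Poly_Mapping.keys p"])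
  also have "\<dots> = DL a b p * q + p * DL a b q" by (simp flip: pm_decomp)
  finally show ?thesis .
qed

lemma DL_xP: "DL a b xP = a"
  by (simp add: xP_def DL_single sP_one wordP_Nil)
lemma DL_yP: "DL a b yP = b"
  by (simp add: yP_def DL_single sP_one wordP_Nil)
lemma DL_one: "DL a b 1 = 0"
  by (simp add: one_FA DL_single zero_W)

lemma DL_pow: "DL a b (p ^ n) = (\<Sum>k<n. p ^ k * DL a b p * p ^ (n - 1 - k))"
proof (induction n)
  case 0 thus ?case by (simp add: DL_one)
next
  case (Suc n)
  have "DL a b (p ^ Suc n) = DL a b p * p ^ n + p * DL a b (p ^ n)" by (simp add: DL_mult)
  also have "\<dots> = DL a b p * p ^ n + (\<Sum>k<n. p ^ Suc k * DL a b p * p ^ (n - Suc k))"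
    by (simp add: Suc sum_distrib_left mult.assoc)
  also have "\<dots> = (\<Sum>k<Suc n. p ^ k * DL a b p * p ^ (Suc n - 1 - k))"
    by (simp add: sum.lessThan_Suc_shift del: sum.lessThan_Suc)
  finally show ?case .
qed

lemma DL_rel_ideal:
  assumes R: "DL a b (relP N) \<in> IN N"
  shows "f \<in> rel_ideal N \<Longrightarrow> DL a b (toP (f :: 'k::comm_ring_1 fa)) \<in> IN N"
proof (induction rule: rel_ideal.induct)
  case gen thus ?case using R by (metis frP_relP toP_frP)
next
  case zero thus ?case by (simp add: toP_zero DL_zero IN_zero)
next
  case (add f g) thus ?case by (simp add: toP_add rel_ideal_carrier DL_add IN_add)
next
  case (mult_left f u)
  have "toP f \<in> IN N" using mult_left(1) rel_ideal_carrier[OF mult_left(1)] by (simp add: IN_def)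
  thus ?case using mult_left
    by (simp add: toP_mult rel_ideal_carrier DL_mult IN_add IN_multL IN_multR)
next
  case (mult_right f u)
  have "toP f \<in> IN N" using mult_right(1) rel_ideal_carrier[OF mult_right(1)] by (simp add: IN_def)
  thus ?case using mult_right
    by (simp add: toP_mult rel_ideal_carrier DL_mult IN_add IN_multL IN_multR)
qed

definition Dfa :: "'k::comm_ring_1 FA \<Rightarrow> 'k FA \<Rightarrow> 'k fa \<Rightarrow> 'k fa" where
  "Dfa a b f = frP (DL a b (toP f))"

lemma eqA_refl: "eqA N f (f :: 'k::comm_ring_1 fa)"
proof -
  have "fa_sub f f = fa_zero" by (simp add: fa_sub_def fa_zero_def)
  thus ?thesis by (simp add: eqA_def rel_ideal.zero)
qed

lemma Dfa_der:
  assumes R: "DL a b (relP N) \<in> IN N"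
  shows "is_derA N (Dfa a b :: 'k::comm_ring_1 fa \<Rightarrow> 'k fa)"
  unfolding is_derA_def
proof (intro conjI ballI allI impI)
  fix f :: "'k fa" assume "f \<in> fa_carrier"
  show "Dfa a b f \<in> fa_carrier" by (simp add: Dfa_def)
next
  fix f g :: "'k fa" assume f: "f \<in> fa_carrier" and g: "g \<in> fa_carrier" and e: "eqA N f g"
  have "toP f - toP g \<in> IN N" using e f g eqA_IN by blast
  hence "DL a b (toP f - toP g) \<in> IN N"
    using DL_rel_ideal[OF R, of "frP (toP f - toP g)"] by (simp add: IN_def)
  thus "eqA N (Dfa a b f) (Dfa a b g)"
    by (simp add: eqA_IN Dfa_def DL_diff)
next
  fix c and f g :: "'k fa" assume f: "f \<in> fa_carrier" and g: "g \<in> fa_carrier"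
  have "Dfa a b (fa_add (fa_smul c f) g) = fa_add (fa_smul c (Dfa a b f)) (Dfa a b g)"
    by (simp add: Dfa_def toP_add toP_smul carrier_smul f g DL_add DL_smul frP_add frP_smul)
  thus "eqA N (Dfa a b (fa_add (fa_smul c f) g)) (fa_add (fa_smul c (Dfa a b f)) (Dfa a b g))"
    by (simp add: eqA_refl)
next
  fix f g :: "'k fa" assume f: "f \<in> fa_carrier" and g: "g \<in> fa_carrier"
  have "Dfa a b (fa_mul f g) = fa_add (fa_mul (Dfa a b f) g) (fa_mul f (Dfa a b g))"
    by (simp add: Dfa_def toP_mult f g DL_mult frP_add frP_mult)
  thus "eqA N (Dfa a b (fa_mul f g)) (fa_add (fa_mul (Dfa a b f) g) (fa_mul f (Dfa a b g)))"
    by (simp add: eqA_refl)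
qed


lemma Phi_exists:
  assumes N: "N \<ge> 1" and k: "k \<ge> 1"
  shows "\<exists>f. is_Phi N k (f :: 'k::field_char_0 fa)"
proof -
  obtain K where K: "N = Suc K" using N by (cases N) auto
  define p where "p = N + (k - 1) * (N - 1)"
  define T where "T = (Mo N (N, k - 1) :: 'k op)"
  have TA: "T \<in> Alg N" by (simp add: T_def Alg_Mo)
  have sT: "suppin (\<lambda>z. deg N z = p \<and> snd z < k) T"
    unfolding T_def by (rule suppin_Mo) (use k in \<open>simp add: p_def deg_def mult.commute\<close>)
  obtain \<Psi> where P: "\<Psi> \<in> Alg N" "homo N (p - 1) (\<Psi> * Yo N)"
     "suppin (\<lambda>z. deg N z = p \<and> fst z < N) (T - cm (\<Psi> * Yo N))"
    using red[OF N TA sT] by blast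
  have PYA: "\<Psi> * Yo N \<in> Alg N" by (simp add: Alg_mult P(1) Alg_Y)
  have "suppin (\<lambda>z. N \<le> fst z) (T - cm (\<Psi> * Yo N))"
    unfolding cm_def
    by (rule suppin_diff, unfold T_def, rule suppin_Mo, simp, rule comm_J[OF N PYA])
  hence "suppin (\<lambda>z. False) (T - cm (\<Psi> * Yo N))"
    using P(3) unfolding suppin_def by (metis not_less)
  hence "T - cm (\<Psi> * Yo N) = 0"
    by (rule Alg_eq0[OF N, rotated]) (simp add: Alg_diff TA cm_def Alg_mult PYA Alg_X)
  hence cmT: "cm (\<Psi> * Yo N) = T" by simp
  obtain g0 where g0: "\<Psi> = rho N g0" using P(1) by (auto simp: Alg_def)
  define f where "f = frP (g0 * yP)"
  have "is_Phi N k f"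
    unfolding is_Phi_def
  proof (intro conjI)
    show "f \<in> fa_carrier" by (simp add: f_def)
    show "\<exists>g\<in>fa_carrier. eqA N f (fa_mul g fa_y)"
      by (intro bexI[of _ "frP g0"]) (simp_all add: f_def frP_mult frP_yP eqA_refl)
    have "p - 1 = k * (N - 1)" using k by (simp add: p_def K algebra_simps)
    thus "homogA N (k * (N - 1)) f"
      using P(2) by (simp add: homogA_iff[OF N] f_def g0 rho_mult rho_yP)
    have l: "fa_sub (fa_mul f fa_x) (fa_mul fa_x f) = frP (g0 * yP * xP - xP * (g0 * yP))"
      by (simp add: f_def frP_mult frP_diff frP_xP)
    have r: "fa_mul (fa_pow fa_x N) (fa_pow fa_y (k - 1)) = frP (xP ^ N * yP ^ (k - 1))"
      by (simp add: frP_mult frP_power frP_xP frP_yP)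
    show "eqA N (fa_sub (fa_mul f fa_x) (fa_mul fa_x f)) (fa_mul (fa_pow fa_x N) (fa_pow fa_y (k - 1)))"
      unfolding l r using cmT
      by (simp add: eqA_rho[OF N frP_carrier frP_carrier] rho_mult rho_diff rho_xP rho_yP rho_power g0
           cm_def T_def Mo_def)
  qed
  thus ?thesis by blast
qed

lemma Phi_prop: assumes "N \<ge> 1" "k \<ge> 1" shows "is_Phi N k (Phi N k :: 'k::field_char_0 fa)"
  using Phi_exists[OF assms] unfolding Phi_def by (rule someI_ex)


lemma ofn_left: "a * (of_nat k * b) = of_nat k * (a * (b :: 'a::ring_1))"
  by (metis mult.assoc mult_of_nat_commute)

lemma TS_ident:
  fixes x w :: "'a::ring_1"
  shows "(\<Sum>k<Suc K. x ^ k * w * x ^ (K - k)) = of_nat (Suc K) * (x ^ K * w)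
     + ((\<Sum>s<K. of_nat (Suc s) * (x ^ s * w * x ^ (K - 1 - s))) * x
        - x * (\<Sum>s<K. of_nat (Suc s) * (x ^ s * w * x ^ (K - 1 - s))))"
proof -
  define f where "f s = x ^ s * w * x ^ (K - s)" for s
  define g where "g s = of_nat s * f s" for s
  have Sx: "(\<Sum>s<K. of_nat (Suc s) * (x ^ s * w * x ^ (K - 1 - s))) * x = (\<Sum>s<K. of_nat (Suc s) * f s)"
    unfolding sum_distrib_right
  proof (rule sum.cong[OF refl])
    fix s assume "s \<in> {..<K}"
    hence "K - s = Suc (K - 1 - s)" by auto
    thus "of_nat (Suc s) * (x ^ s * w * x ^ (K - 1 - s)) * x = of_nat (Suc s) * f s"
      by (simp add: f_def mult.assoc power_commutes del: of_nat_Suc)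
  qed
  have xS: "x * (\<Sum>s<K. of_nat (Suc s) * (x ^ s * w * x ^ (K - 1 - s))) = (\<Sum>s<K. of_nat (Suc s) * f (Suc s))"
    unfolding sum_distrib_left
  proof (rule sum.cong[OF refl])
    fix s assume "s \<in> {..<K}"
    hence "K - 1 - s = K - Suc s" by auto
    thus "x * (of_nat (Suc s) * (x ^ s * w * x ^ (K - 1 - s))) = of_nat (Suc s) * f (Suc s)"
      by (simp add: f_def ofn_left mult.assoc del: of_nat_Suc)
  qed
  have tm: "of_nat (Suc s) * f s - of_nat (Suc s) * f (Suc s) = f s + (g s - g (Suc s))" for s
    by (simp add: g_def algebra_simps)
  have tele: "(\<Sum>s<K. of_nat (Suc s) * f s) - (\<Sum>s<K. of_nat (Suc s) * f (Suc s)) = (\<Sum>s<K. f s) - of_nat K * f K"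
  proof -
    have "(\<Sum>s<K. of_nat (Suc s) * f s) - (\<Sum>s<K. of_nat (Suc s) * f (Suc s))
        = (\<Sum>s<K. of_nat (Suc s) * f s - of_nat (Suc s) * f (Suc s))"
      by (simp add: sum_subtractf)
    also have "\<dots> = (\<Sum>s<K. f s) + (\<Sum>s<K. g s - g (Suc s))"
      by (simp only: tm sum.distrib)
    also have "\<dots> = (\<Sum>s<K. f s) - of_nat K * f K"
      by (simp only: sum_lessThan_telescope') (simp add: g_def)
    finally show ?thesis .
  qed
  have T: "(\<Sum>k<Suc K. x ^ k * w * x ^ (K - k)) = (\<Sum>s<K. f s) + f K"
    by (simp add: f_def)
  have fK: "f K = x ^ K * w" by (simp add: f_def)
  show ?thesis unfolding Sx xS T
    using tele fK by (simp add: algebra_simps of_nat_Suc)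
qed

lemma key_identity:
  fixes x y P :: "'a::ring_1"
  assumes r: "y * x - x * y = x ^ Suc K" and Pr: "P * x - x * P = x ^ Suc K * y ^ j"
    and i1: "1 \<le> i" and iK: "i \<le> Suc K"
  shows "((\<Sum>s<K. of_nat (Suc s) * (x ^ (s + i) * y ^ j * x ^ (K - 1 - s))) + of_nat (Suc K - i) * (x ^ (i - 1) * P)) * x
       + y * (x ^ i * y ^ j)
       - (x ^ i * y ^ j * y + x * ((\<Sum>s<K. of_nat (Suc s) * (x ^ (s + i) * y ^ j * x ^ (K - 1 - s))) + of_nat (Suc K - i) * (x ^ (i - 1) * P)))
       - (\<Sum>k<Suc K. x ^ k * (x ^ i * y ^ j) * x ^ (K - k)) = 0"
proof -
  define S where "S = (\<Sum>s<K. of_nat (Suc s) * (x ^ s * y ^ j * x ^ (K - 1 - s)))"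
  define T where "T = (\<Sum>k<Suc K. x ^ k * y ^ j * x ^ (K - k))"
  define Z where "Z = x ^ (i + K) * y ^ j"
  have xixs: "x ^ i * x ^ s = x ^ (s + i)" for s by (simp add: power_add[symmetric] add.commute)
  have xixs': "a * x ^ i * x ^ s = a * x ^ (s + i)" for a s by (simp add: mult.assoc xixs)
  have B1: "(\<Sum>s<K. of_nat (Suc s) * (x ^ (s + i) * y ^ j * x ^ (K - 1 - s))) = x ^ i * S"
    unfolding S_def sum_distrib_left
    by (rule sum.cong[OF refl]) (simp only: ofn_left, simp only: mult.assoc[symmetric] xixs')
  have T1: "(\<Sum>k<Suc K. x ^ k * (x ^ i * y ^ j) * x ^ (K - k)) = x ^ i * T"
    unfolding T_def sum_distrib_left
  proof (rule sum.cong[OF refl])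
    fix k
    have xx: "x ^ k * x ^ i = x ^ i * x ^ k" by (simp add: power_add[symmetric] add.commute)
    show "x ^ k * (x ^ i * y ^ j) * x ^ (K - k) = x ^ i * (x ^ k * y ^ j * x ^ (K - k))"
      by (simp add: mult.assoc[symmetric] xx)
  qed
  have TS: "T = of_nat (Suc K) * (x ^ K * y ^ j) + (S * x - x * S)"
    unfolding T_def S_def by (rule TS_ident)
  have yA: "y * (x ^ i * y ^ j) - x ^ i * y ^ j * y = of_nat i * Z"
  proof -
    have "y * (x ^ i * y ^ j) - x ^ i * y ^ j * y = (y * x ^ i - x ^ i * y) * y ^ j"
      by (simp add: algebra_simps power_commutes mult.assoc)
    also have "y * x ^ i - x ^ i * y = of_nat i * x ^ (i + K)"
    proof (induction i)
      case 0 thus ?case by simp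
    next
      case (Suc e)
      have "(y * x ^ e - x ^ e * y - of_nat e * x ^ (e + K)) * x + x ^ e * (y * x - x * y - x ^ Suc K)
         = y * x ^ Suc e - x ^ Suc e * y - of_nat (Suc e) * x ^ (Suc e + K)"
      proof -
        have h1: "y * x ^ e * x = y * x ^ Suc e" by (simp only: power_Suc2 mult.assoc)
        have h2: "x ^ e * x * y = x ^ Suc e * y" by (simp only: power_Suc2)
        have h3: "x ^ (e + K) * x = x ^ (Suc e + K)" by (metis add_Suc power_Suc2)
        have h4: "x ^ e * x ^ Suc K = x ^ (Suc e + K)" by (simp only: power_add[symmetric] add_Suc add_Suc_right)
        have "(y * x ^ e - x ^ e * y - of_nat e * x ^ (e + K)) * x + x ^ e * (y * x - x * y - x ^ Suc K)
           = y * x ^ e * x - x ^ e * y * x - of_nat e * (x ^ (e + K) * x) + (x ^ e * y * x - x ^ e * x * y - x ^ e * x ^ Suc K)"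
          by (simp add: algebra_simps)
        also have "\<dots> = y * x ^ Suc e - x ^ e * y * x - of_nat e * x ^ (Suc e + K) + (x ^ e * y * x - x ^ Suc e * y - x ^ (Suc e + K))"
          by (simp only: h1 h2 h3 h4)
        also have "\<dots> = y * x ^ Suc e - x ^ Suc e * y - of_nat (Suc e) * x ^ (Suc e + K)"
          by (simp add: algebra_simps of_nat_Suc)
        finally show ?thesis .
      qed
      thus ?case using Suc r by simp
    qed
    finally show ?thesis by (simp add: Z_def mult.assoc)
  qed
  have xP: "x ^ (i - 1) * (P * x - x * P) = Z"
  proof -
    obtain i' where ii: "i = Suc i'" using i1 by (cases i) auto
    have "x ^ i' * x ^ Suc K = x ^ (i' + Suc K)" by (rule power_add[symmetric])
    hence "x ^ (i - 1) * x ^ Suc K = x ^ (i + K)" by (simp add: ii)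
    thus ?thesis by (simp add: Pr Z_def mult.assoc[symmetric])
  qed
  have xK: "x ^ i * (of_nat (Suc K) * (x ^ K * y ^ j)) = of_nat (Suc K) * Z"
    by (simp add: ofn_left Z_def power_add mult.assoc del: of_nat_Suc)
  have Bx: "(x ^ i * S + of_nat (Suc K - i) * (x ^ (i - 1) * P)) * x - x * (x ^ i * S + of_nat (Suc K - i) * (x ^ (i - 1) * P))
      = x ^ i * (S * x - x * S) + of_nat (Suc K - i) * (x ^ (i - 1) * (P * x - x * P))"
  proof -
    have a: "x ^ i * S * x - x * (x ^ i * S) = x ^ i * (S * x - x * S)"
      by (simp add: algebra_simps power_commutes flip: mult.assoc)
    have b: "x ^ (i - 1) * P * x - x * (x ^ (i - 1) * P) = x ^ (i - 1) * (P * x - x * P)"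
      by (simp add: algebra_simps power_commutes flip: mult.assoc)
    have c: "x * (of_nat (Suc K - i) * (x ^ (i - 1) * P)) = of_nat (Suc K - i) * (x * (x ^ (i - 1) * P))"
      by (rule ofn_left)
    have "(x ^ i * S + of_nat (Suc K - i) * (x ^ (i - 1) * P)) * x - x * (x ^ i * S + of_nat (Suc K - i) * (x ^ (i - 1) * P))
       = (x ^ i * S * x - x * (x ^ i * S)) + of_nat (Suc K - i) * (x ^ (i - 1) * P * x - x * (x ^ (i - 1) * P))"
      unfolding distrib_right distrib_left c by (simp add: algebra_simps)
    thus ?thesis unfolding a b .
  qed
  have ofd: "of_nat (Suc K - i) = (of_nat (Suc K) - of_nat i :: 'a)" using iK by (simp add: of_nat_diff)
  have main: "(x ^ i * S + of_nat (Suc K - i) * (x ^ (i - 1) * P)) * x + y * (x ^ i * y ^ j)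
     - (x ^ i * y ^ j * y + x * (x ^ i * S + of_nat (Suc K - i) * (x ^ (i - 1) * P))) - x ^ i * T = 0"
  proof -
    have "(x ^ i * S + of_nat (Suc K - i) * (x ^ (i - 1) * P)) * x + y * (x ^ i * y ^ j)
     - (x ^ i * y ^ j * y + x * (x ^ i * S + of_nat (Suc K - i) * (x ^ (i - 1) * P))) - x ^ i * T
     = ((x ^ i * S + of_nat (Suc K - i) * (x ^ (i - 1) * P)) * x - x * (x ^ i * S + of_nat (Suc K - i) * (x ^ (i - 1) * P)))
       + (y * (x ^ i * y ^ j) - x ^ i * y ^ j * y) - x ^ i * T"
      by (simp add: algebra_simps)
    also have "\<dots> = x ^ i * (S * x - x * S) + of_nat (Suc K - i) * Z + of_nat i * Z - x ^ i * (of_nat (Suc K) * (x ^ K * y ^ j) + (S * x - x * S))"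
      unfolding Bx yA xP TS ..
    also have "\<dots> = 0" unfolding distrib_left[of "x ^ i"] xK ofd by (simp add: algebra_simps)
    finally show ?thesis .
  qed
  show ?thesis using main unfolding B1 T1 .
qed


lemma toP_fa_x: "toP (fa_x :: 'k::comm_ring_1 fa) = xP" by (metis frP_xP toP_frP)
lemma toP_fa_y: "toP (fa_y :: 'k::comm_ring_1 fa) = yP" by (metis frP_yP toP_frP)
lemma fa_pow_frP: "fa_pow (frP p) n = frP (p ^ n)" by (simp add: frP_power)

lemma frP_sum_smul:
  "frP (\<Sum>s\<in>A. sP (c s) * m s) = (\<lambda>w. \<Sum>s\<in>A. c s * frP (m s :: 'k::comm_ring_1 FA) w)"
  by (simp add: frP_def lookup_sum lookup_sP_mult)

theorem proposition5p7:
  fixes N l i j :: nat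
  assumes "N \<ge> 2" and "l \<ge> 1"
    and "l + 1 = i + j * (N - 1)" and "1 \<le> i" and "i \<le> N - 1"
  shows "\<exists>D :: 'k::field_char_0 fa \<Rightarrow> 'k fa.
     is_derA N D \<and> homog_derA N l D \<and>
     eqA N (D fa_x) (fa_mul (fa_pow fa_x i) (fa_pow fa_y j)) \<and>
     eqA N (D fa_y)
       (fa_add
         (\<lambda>w. \<Sum>s<N - 1. of_nat (s + 1) *
            fa_mul (fa_mul (fa_pow fa_x (s + i)) (fa_pow fa_y j)) (fa_pow fa_x (N - 2 - s)) w)
         (fa_smul (of_nat (N - i)) (fa_mul (fa_pow fa_x (i - 1)) (Phi N (j + 1))))) \<and>
     (\<forall>E. is_derA N E \<and> homog_derA N l E \<longrightarrow>
        (\<exists>c. \<exists>a\<in>fa_carrier. \<forall>f\<in>fa_carrier.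
           eqA N (E f) (fa_add (fa_smul c (D f)) (fa_sub (fa_mul a f) (fa_mul f a)))))"
proof -
  note N2 = assms(1) and l1 = assms(2) and lij = assms(3) and i1 = assms(4) and iN = assms(5)
  have N: "N \<ge> 1" using N2 by simp
  obtain K where K: "N = Suc K" using N by (cases N) auto
  define Phi0 where "Phi0 = (Phi N (j + 1) :: 'k fa)"
  have PP: "is_Phi N (Suc j) Phi0" unfolding Phi0_def using Phi_prop[OF N, of "Suc j"] by simp
  have Pc: "Phi0 \<in> fa_carrier" and Ph: "homogA N (Suc j * (N - 1)) Phi0"
    and Pe: "eqA N (fa_sub (fa_mul Phi0 fa_x) (fa_mul fa_x Phi0)) (fa_mul (fa_pow fa_x N) (fa_pow fa_y j))"
    using PP unfolding is_Phi_def by auto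
  define Po where "Po = rho N (toP Phi0)"
  have hPo: "homo N (Suc j * (N - 1)) Po" using Ph homogA_iff[OF N Pc] by (simp add: Po_def)
  have PoA: "Po \<in> Alg N" by (simp add: Po_def)
  have PoRel: "Po * Xo - Xo * Po = Xo ^ N * Yo N ^ j"
  proof -
    have c1: "fa_sub (fa_mul Phi0 fa_x) (fa_mul fa_x Phi0) \<in> fa_carrier"
      by (simp add: carrier_sub carrier_mul Pc flip: frP_xP)
    have c2: "fa_mul (fa_pow fa_x N) (fa_pow fa_y j) \<in> (fa_carrier :: 'k fa set)"
      by (simp add: carrier_mul flip: frP_xP frP_yP frP_power)
    have "rho N (toP (fa_sub (fa_mul Phi0 fa_x) (fa_mul fa_x Phi0))) = rho N (toP (fa_mul (fa_pow fa_x N) (fa_pow (fa_y :: 'k fa) j)))"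
      using Pe eqA_rho[OF N c1 c2] by simp
    thus ?thesis
      by (simp add: toP_sub toP_mult carrier_mul Pc toP_fa_x rho_diff rho_mult rho_xP rho_yP Po_def
            flip: frP_xP frP_yP frP_power) (simp add: rho_power rho_xP rho_yP)
  qed
  define U where "U = (xP ^ i * yP ^ j :: 'k FA)"
  define tgtP where "tgtP = (\<Sum>s<N - 1. sP (of_nat (s + 1)) * (xP ^ (s + i) * yP ^ j * xP ^ (N - 2 - s)))
      + sP (of_nat (N - i)) * (xP ^ (i - 1) * toP Phi0)"
  have tgt: "frP tgtP = fa_add
         (\<lambda>w. \<Sum>s<N - 1. of_nat (s + 1) *
            fa_mul (fa_mul (fa_pow fa_x (s + i)) (fa_pow fa_y j)) (fa_pow fa_x (N - 2 - s)) w)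
         (fa_smul (of_nat (N - i)) (fa_mul (fa_pow fa_x (i - 1)) (Phi N (j + 1))))"
    unfolding tgtP_def frP_add frP_sum_smul
    by (simp only: frP_smul) (simp add: frP_mult frP_power frP_xP frP_yP Pc, simp add: Phi0_def)
  have rhoT: "rho N tgtP = (\<Sum>s<K. of_nat (Suc s) * (Xo ^ (s + i) * Yo N ^ j * Xo ^ (K - 1 - s)))
      + of_nat (Suc K - i) * (Xo ^ (i - 1) * Po)"
    by (simp add: tgtP_def rho_add rho_sum rho_mult rho_sP rho_power rho_xP rho_yP sc_of_nat Po_def K
        del: of_nat_Suc)
  have R: "DL U tgtP (relP N) \<in> IN N"
  proof (rule rho_inj[OF N])
    have "DL U tgtP (relP N) = (tgtP * xP + yP * U) - (U * yP + xP * tgtP) - (\<Sum>k<N. xP ^ k * U * xP ^ (N - 1 - k))"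
      by (simp add: relP_def DL_diff DL_mult DL_xP DL_yP DL_pow)
    hence "rho N (DL U tgtP (relP N)) = (rho N tgtP * Xo + Yo N * (Xo ^ i * Yo N ^ j))
        - (Xo ^ i * Yo N ^ j * Yo N + Xo * rho N tgtP) - (\<Sum>k<N. Xo ^ k * (Xo ^ i * Yo N ^ j) * Xo ^ (N - 1 - k))"
      by (simp add: rho_diff rho_add rho_mult rho_sum rho_xP rho_yP rho_power U_def)
    also have "\<dots> = 0"
      unfolding rhoT unfolding K diff_Suc_1
      by (rule key_identity[OF YX_rel[OF N, unfolded K] PoRel[unfolded K] i1 le_SucI[OF iN[unfolded K diff_Suc_1]]])
    finally show "rho N (DL U tgtP (relP N)) = 0" .
  qed
  define D where "D = (Dfa U tgtP :: 'k fa \<Rightarrow> 'k fa)"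
  have DD: "is_derA N D" unfolding D_def by (rule Dfa_der[OF R])
  have Dx: "D fa_x = frP U" by (simp add: D_def Dfa_def toP_fa_x DL_xP)
  have Dy: "D fa_y = frP tgtP" by (simp add: D_def Dfa_def toP_fa_y DL_yP)
  define Do where "Do = lift N D"
  have DoD: "isDer N Do" unfolding Do_def by (rule lift_isDer[OF N DD])
  have DoX: "Do Xo = Xo ^ i * Yo N ^ j"
    using lift_rho[OF N DD, of xP] by (simp add: Do_def rho_xP frP_xP Dx U_def rho_mult rho_power rho_yP)
  have DoY: "Do (Yo N) = rho N tgtP"
    using lift_rho[OF N DD, of yP] by (simp add: Do_def rho_yP frP_yP Dy)
  have hDoX: "homo N (Suc l) (Do Xo)"
    using homo_mult[OF N Alg_pow[OF Alg_X] homo_Xpow[of N i] homo_Ypow[of N j]] lij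
    by (simp add: DoX)
  have hDoY: "homo N (l + (N - 1)) (Do (Yo N))"
  proof -
    have a: "homo N (l + (N - 1)) (of_nat (Suc s) * (Xo ^ (s + i) * Yo N ^ j * Xo ^ (K - 1 - s)))" if "s < K" for s
    proof -
      have "homo N ((s + i) + j * (N - 1) + (K - 1 - s)) (Xo ^ (s + i) * Yo N ^ j * Xo ^ (K - 1 - s))"
        by (intro homo_mult[OF N] homo_Xpow homo_Ypow Alg_mult Alg_pow Alg_X Alg_Y)
      moreover have "(s + i) + j * (N - 1) + (K - 1 - s) = l + (N - 1)" using that lij K by simp
      ultimately show ?thesis using homo_of_nat by metis
    qed
    have b: "homo N (l + (N - 1)) (of_nat (Suc K - i) * (Xo ^ (i - 1) * Po))"
    proof -
      have "homo N ((i - 1) + Suc j * (N - 1)) (Xo ^ (i - 1) * Po)"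
        by (intro homo_mult[OF N] homo_Xpow hPo Alg_pow Alg_X)
      moreover have "(i - 1) + Suc j * (N - 1) = l + (N - 1)" using i1 lij K by simp
      ultimately show ?thesis using homo_of_nat by metis
    qed
    show ?thesis unfolding DoY rhoT by (intro homo_add homo_sum a b) auto
  qed
  have hD: "homog_derA N l D"
    unfolding homog_derA_def
  proof (intro allI ballI impI)
    fix p and f :: "'k fa" assume f: "f \<in> fa_carrier" and hf: "homogA N p f"
    have "homo N p (rho N (toP f))" using hf homogA_iff[OF N f] by simp
    hence "homo N (p + l) (Do (rho N (toP f)))"
      using der_homo[OF N DoD _ hDoY] hDoX by simp
    moreover have "Do (rho N (toP f)) = rho N (toP (D f))"
      using lift_rho[OF N DD, of "toP f"] f by (simp add: Do_def)
    ultimately show "homogA N (p + l) (D f)"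
      using homogA_iff[OF N is_derA_D(1)[OF DD f]] by simp
  qed
  show ?thesis
  proof (intro exI[of _ D] conjI allI impI)
    show "is_derA N D" by (rule DD)
    show "homog_derA N l D" by (rule hD)
    show "eqA N (D fa_x) (fa_mul (fa_pow fa_x i) (fa_pow fa_y j))"
      by (simp add: Dx U_def frP_mult frP_power frP_xP frP_yP eqA_refl)
    show "eqA N (D fa_y)
       (fa_add
         (\<lambda>w. \<Sum>s<N - 1. of_nat (s + 1) *
            fa_mul (fa_mul (fa_pow fa_x (s + i)) (fa_pow fa_y j)) (fa_pow fa_x (N - 2 - s)) w)
         (fa_smul (of_nat (N - i)) (fa_mul (fa_pow fa_x (i - 1)) (Phi N (j + 1)))))"
      unfolding Dy tgt by (rule eqA_refl)
  next
    fix E :: "'k fa \<Rightarrow> 'k fa"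
    assume EE: "is_derA N E \<and> homog_derA N l E"
    define Eo where "Eo = lift N E"
    have EoD: "isDer N Eo" unfolding Eo_def by (rule lift_isDer[OF N]) (use EE in blast)
    have hEo: "homo N (p + l) (Eo T)" if "T \<in> Alg N" "homo N p T" for p T
      unfolding Eo_def by (rule lift_homo[OF N _ _ that]) (use EE in blast)+
    obtain c A where cA: "A \<in> Alg N" "\<forall>T\<in>Alg N. Eo T = sc c * Do T + (A * T - T * A)"
      using core[OF N2 l1 lij i1 iN EoD hEo DoD DoX hDoY] by blast
    obtain a0 where a0: "A = rho N a0" using cA(1) by (auto simp: Alg_def)
    show "\<exists>c. \<exists>a\<in>fa_carrier. \<forall>f\<in>fa_carrier.
           eqA N (E f) (fa_add (fa_smul c (D f)) (fa_sub (fa_mul a f) (fa_mul f a)))"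
    proof (intro exI[of _ c] bexI[of _ "frP a0"] ballI)
      show "frP a0 \<in> fa_carrier" by simp
      fix f :: "'k fa" assume f: "f \<in> fa_carrier"
      have Ec: "E f \<in> fa_carrier" using EE is_derA_D(1) f by blast
      have Dc: "D f \<in> fa_carrier" using is_derA_D(1)[OF DD f] .
      have rc: "fa_add (fa_smul c (D f)) (fa_sub (fa_mul (frP a0) f) (fa_mul f (frP a0))) \<in> fa_carrier"
        by (simp add: carrier_add carrier_smul carrier_sub carrier_mul Dc f)
      have e1: "rho N (toP (E f)) = Eo (rho N (toP f))"
        using lift_rho[of N E "toP f"] N EE f by (simp add: Eo_def)
      have e2: "Do (rho N (toP f)) = rho N (toP (D f))"
        using lift_rho[OF N DD, of "toP f"] f by (simp add: Do_def)
      have "rho N (toP (E f)) = rho N (toP (fa_add (fa_smul c (D f)) (fa_sub (fa_mul (frP a0) f) (fa_mul f (frP a0)))))"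
        unfolding e1 using cA(2) e2 a0
        by (simp add: toP_add toP_smul toP_sub toP_mult carrier_smul carrier_sub carrier_mul Dc f
              rho_add rho_mult rho_diff rho_sP)
      thus "eqA N (E f) (fa_add (fa_smul c (D f)) (fa_sub (fa_mul (frP a0) f) (fa_mul f (frP a0))))"
        using eqA_rho[OF N Ec rc] by simp
    qed
  qed
qed


end
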